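(* Let $(M^n,g)$ be a Riemannian manifold with Levi-Civita connection which is pseudosymmetric, i.e. there is a scalar function $L_R$ with $$[\nabla_a, \nabla_b] R_{cdef} = L_R\, Q(g,R)_{cdefab},$$ where $$Q(g,R)_{cdefab}= -g_{cb}R_{adef}+g_{ca}R_{bdef}-g_{db}R_{caef}+g_{da}R_{cbef} -g_{eb}R_{cdaf}+g_{ea}R_{cdbf}-g_{fb}R_{cdea}+g_{fa}R_{cdeb}.$$ Then $$R_{am}R_{bce}{}^m + R_{bm}R_{cae}{}^m+ R_{cm}R_{abe}{}^m =0\quad\text{and}\quad R_{am} R_{bec}{}^m - R_{bm}R_{ace}{}^m + R_{cm} R_{eba}{}^m -R_{em} R_{cab}{}^m =0 .$$
   Context: Abstract index notation with Einstein summation; indices lowered with $g$, $R_{abcd}=R_{abc}{}^eg_{ed}$. $R_{abc}{}^d = \partial_a \Gamma_{bc}^d - \partial_b\Gamma_{ac}^d - \Gamma_{ac}^k\Gamma_{bk}^d + \Gamma_{ak}^d \Gamma_{bc}^k$, $R_{ac}=R_{abc}{}^b$, $[\nabla_a,\nabla_b]=\nabla_a\nabla_b-\nabla_b\nabla_a$. *)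

theory Defs
  imports "HOL-Analysis.Analysis"
begin

text \<open>Local-coordinate setting: a chart domain U (open subset of R^n, with index
type 'n), metric components g x i j.\<close>

definition pd :: "'n::finite \<Rightarrow> (real^'n \<Rightarrow> real) \<Rightarrow> real^'n \<Rightarrow> real" where
  "pd a f x = deriv (\<lambda>t. f (x + t *\<^sub>R axis a 1)) 0"

fun ipd :: "'n::finite list \<Rightarrow> (real^'n \<Rightarrow> real) \<Rightarrow> real^'n \<Rightarrow> real" where
  "ipd [] f = f"
| "ipd (a # as) f = pd a (ipd as f)"

definition smooth_on :: "(real^'n::finite) set \<Rightarrow> (real^'n \<Rightarrow> real) \<Rightarrow> bool" where
  "smooth_on U f \<longleftrightarrow> (\<forall>as. \<forall>x\<in>U. ipd as f differentiable (at x))"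

definition riemannian_metric_on ::
  "(real^'n::finite) set \<Rightarrow> (real^'n \<Rightarrow> 'n \<Rightarrow> 'n \<Rightarrow> real) \<Rightarrow> bool" where
  "riemannian_metric_on U g \<longleftrightarrow> open U \<and>
     (\<forall>i j. smooth_on U (\<lambda>x. g x i j)) \<and>
     (\<forall>x\<in>U. \<forall>i j. g x i j = g x j i) \<and>
     (\<forall>x\<in>U. \<forall>v::real^'n. v \<noteq> 0 \<longrightarrow> (\<Sum>i\<in>UNIV. \<Sum>j\<in>UNIV. g x i j * v$i * v$j) > 0)"

definition ginv :: "(real^'n::finite \<Rightarrow> 'n \<Rightarrow> 'n \<Rightarrow> real) \<Rightarrow> real^'n \<Rightarrow> 'n \<Rightarrow> 'n \<Rightarrow> real" where
  "ginv g x i j = matrix_inv (\<chi> k l. g x k l) $ i $ j"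

definition Gamma :: "(real^'n::finite \<Rightarrow> 'n \<Rightarrow> 'n \<Rightarrow> real) \<Rightarrow> real^'n \<Rightarrow> 'n \<Rightarrow> 'n \<Rightarrow> 'n \<Rightarrow> real" where
  "Gamma g x a b c = (1/2) * (\<Sum>d\<in>UNIV. ginv g x c d *
      (pd a (\<lambda>y. g y b d) x + pd b (\<lambda>y. g y a d) x - pd d (\<lambda>y. g y a b) x))"

definition Rup :: "(real^'n::finite \<Rightarrow> 'n \<Rightarrow> 'n \<Rightarrow> real) \<Rightarrow> real^'n \<Rightarrow> 'n \<Rightarrow> 'n \<Rightarrow> 'n \<Rightarrow> 'n \<Rightarrow> real" where
  "Rup g x a b c d = pd a (\<lambda>y. Gamma g y b c d) x - pd b (\<lambda>y. Gamma g y a c d) x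
     - (\<Sum>k\<in>UNIV. Gamma g x a c k * Gamma g x b k d) + (\<Sum>k\<in>UNIV. Gamma g x a k d * Gamma g x b c k)"

definition Rlow :: "(real^'n::finite \<Rightarrow> 'n \<Rightarrow> 'n \<Rightarrow> real) \<Rightarrow> real^'n \<Rightarrow> 'n \<Rightarrow> 'n \<Rightarrow> 'n \<Rightarrow> 'n \<Rightarrow> real" where
  "Rlow g x a b c d = (\<Sum>e\<in>UNIV. Rup g x a b c e * g x e d)"

definition Ric :: "(real^'n::finite \<Rightarrow> 'n \<Rightarrow> 'n \<Rightarrow> real) \<Rightarrow> real^'n \<Rightarrow> 'n \<Rightarrow> 'n \<Rightarrow> real" where
  "Ric g x a c = (\<Sum>b\<in>UNIV. Rup g x a b c b)"

text \<open>Covariant tensor fields of arbitrary rank, indexed by lists of indices.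
 (nabla T)_{a i1 ... ik} = d_a T_{i1...ik} - sum_j Gamma_{a ij}^k T_{i1..k..ik}\<close>
definition nabla :: "(real^'n::finite \<Rightarrow> 'n \<Rightarrow> 'n \<Rightarrow> real) \<Rightarrow> (real^'n \<Rightarrow> 'n list \<Rightarrow> real)
     \<Rightarrow> real^'n \<Rightarrow> 'n list \<Rightarrow> real" where
  "nabla g T x ids = (case ids of [] \<Rightarrow> 0
     | a # is \<Rightarrow> pd a (\<lambda>y. T y is) x
        - (\<Sum>j<length is. \<Sum>k\<in>UNIV. Gamma g x a (is ! j) k * T x (is[j := k])))"

definition Rtensor :: "(real^'n::finite \<Rightarrow> 'n \<Rightarrow> 'n \<Rightarrow> real) \<Rightarrow> real^'n \<Rightarrow> 'n list \<Rightarrow> real" where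
  "Rtensor g x is = Rlow g x (is!0) (is!1) (is!2) (is!3)"

definition QgR :: "(real^'n::finite \<Rightarrow> 'n \<Rightarrow> 'n \<Rightarrow> real) \<Rightarrow> real^'n \<Rightarrow> 'n \<Rightarrow> 'n \<Rightarrow> 'n \<Rightarrow> 'n \<Rightarrow> 'n \<Rightarrow> 'n \<Rightarrow> real" where
  "QgR g x c d e f a b =
     - g x c b * Rlow g x a d e f + g x c a * Rlow g x b d e f
     - g x d b * Rlow g x c a e f + g x d a * Rlow g x c b e f
     - g x e b * Rlow g x c d a f + g x e a * Rlow g x c d b f
     - g x f b * Rlow g x c d e a + g x f a * Rlow g x c d e b"

definition pseudosymmetric_on :: "(real^'n::finite) set \<Rightarrow> (real^'n \<Rightarrow> 'n \<Rightarrow> 'n \<Rightarrow> real) \<Rightarrow> bool" where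
  "pseudosymmetric_on U g \<longleftrightarrow> (\<exists>L :: real^'n \<Rightarrow> real. \<forall>x\<in>U. \<forall>a b c d e f.
     nabla g (nabla g (Rtensor g)) x [a,b,c,d,e,f] - nabla g (nabla g (Rtensor g)) x [b,a,c,d,e,f]
       = L x * QgR g x c d e f a b)"

end

theory Submission
  imports Defs
begin

lemma line_deriv:
  fixes f :: "real^'n::finite \<Rightarrow> real"
  assumes "(f has_derivative D) (at (z + s0 *\<^sub>R v))"
  shows "((\<lambda>s. f (z + s *\<^sub>R v)) has_real_derivative D v) (at s0)"
proof -
  have l: "((\<lambda>s. z + s *\<^sub>R v) has_derivative (\<lambda>s. s *\<^sub>R v)) (at s0)"
    by (auto intro!: derivative_eq_intros)
  have c: "((\<lambda>s. f (z + s *\<^sub>R v)) has_derivative (\<lambda>s. D (s *\<^sub>R v))) (at s0)"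
    using has_derivative_compose[OF l assms] by (simp add: o_def)
  have "bounded_linear D" using assms has_derivative_bounded_linear by blast
  then have "(\<lambda>s. D (s *\<^sub>R v)) = (\<lambda>s. D v * s)"
    by (auto simp: linear_scale[OF bounded_linear.linear])
  then show ?thesis using c unfolding has_field_derivative_def by simp
qed

lemma pd_eq:
  fixes f :: "real^'n::finite \<Rightarrow> real"
  assumes "(f has_derivative D) (at y)"
  shows "pd a f y = D (axis a 1)"
proof -
  have "((\<lambda>s. f (y + s *\<^sub>R axis a 1)) has_real_derivative D (axis a 1)) (at 0)"
    by (rule line_deriv) (use assms in simp)
  then show ?thesis unfolding pd_def by (rule DERIV_imp_deriv)
qed

lemma pd_local:
  fixes f :: "real^'n::finite \<Rightarrow> real"
  assumes "open U" "x \<in> U" "\<And>y. y \<in> U \<Longrightarrow> f y = h y"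
  shows "pd a f x = pd a h x"
proof -
  obtain e where e: "e > 0" "ball x e \<subseteq> U" using assms(1,2) open_contains_ball by blast
  have "eventually (\<lambda>t::real. f (x + t *\<^sub>R axis a 1) = h (x + t *\<^sub>R axis a 1)) (nhds 0)"
    unfolding eventually_nhds_metric
  proof (intro exI conjI allI impI)
    show "e > 0" by fact
    fix t :: real assume "dist t 0 < e"
    then have "x + t *\<^sub>R axis a 1 \<in> ball x e" by (simp add: dist_norm)
    then show "f (x + t *\<^sub>R axis a 1) = h (x + t *\<^sub>R axis a 1)" using e assms(3) by blast
  qed
  then show ?thesis unfolding pd_def by (intro deriv_cong_ev) auto
qed

lemma pd_diffble:
  fixes f :: "real^'n::finite \<Rightarrow> real"
  assumes "f differentiable (at y)"
  shows "pd a f y = frechet_derivative f (at y) (axis a 1)"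
  by (rule pd_eq) (use assms frechet_derivative_works in blast)

lemma pd_add:
  fixes f h :: "real^'n::finite \<Rightarrow> real"
  assumes "f differentiable (at y)" "h differentiable (at y)"
  shows "pd a (\<lambda>y. f y + h y) y = pd a f y + pd a h y"
proof -
  obtain D1 D2 where d: "(f has_derivative D1) (at y)" "(h has_derivative D2) (at y)"
    using assms unfolding differentiable_def by blast
  have "((\<lambda>y. f y + h y) has_derivative (\<lambda>v. D1 v + D2 v)) (at y)"
    using d by (intro derivative_intros)
  then show ?thesis using pd_eq d by metis
qed

lemma pd_diff:
  fixes f h :: "real^'n::finite \<Rightarrow> real"
  assumes "f differentiable (at y)" "h differentiable (at y)"
  shows "pd a (\<lambda>y. f y - h y) y = pd a f y - pd a h y"
proof -
  obtain D1 D2 where d: "(f has_derivative D1) (at y)" "(h has_derivative D2) (at y)"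
    using assms unfolding differentiable_def by blast
  have "((\<lambda>y. f y - h y) has_derivative (\<lambda>v. D1 v - D2 v)) (at y)"
    using d by (intro derivative_intros)
  then show ?thesis using pd_eq d by metis
qed

lemma pd_mult:
  fixes f h :: "real^'n::finite \<Rightarrow> real"
  assumes "f differentiable (at y)" "h differentiable (at y)"
  shows "pd a (\<lambda>y. f y * h y) y = pd a f y * h y + f y * pd a h y"
proof -
  obtain D1 D2 where d: "(f has_derivative D1) (at y)" "(h has_derivative D2) (at y)"
    using assms unfolding differentiable_def by blast
  have "((\<lambda>y. f y * h y) has_derivative (\<lambda>v. f y * D2 v + D1 v * h y)) (at y)"
    using d by (intro derivative_intros)
  then have "pd a (\<lambda>y. f y * h y) y = f y * D2 (axis a 1) + D1 (axis a 1) * h y" by (rule pd_eq)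
  then show ?thesis using pd_eq d by (metis add.commute)
qed

lemma pd_const: "pd a (\<lambda>y. c::real) (y::real^'n::finite) = 0"
proof -
  have "((\<lambda>y::real^'n. c) has_derivative (\<lambda>v. 0)) (at y)" by (intro derivative_intros)
  then show ?thesis by (rule pd_eq)
qed

lemma pd_minus:
  fixes f :: "real^'n::finite \<Rightarrow> real"
  assumes "f differentiable (at y)"
  shows "pd a (\<lambda>y. - f y) y = - pd a f y"
proof -
  obtain D1 where d: "(f has_derivative D1) (at y)"
    using assms unfolding differentiable_def by blast
  have "((\<lambda>y. - f y) has_derivative (\<lambda>v. - D1 v)) (at y)"
    using d by (intro derivative_intros)
  then show ?thesis using pd_eq d by metis
qed

lemma pd_sum:
  fixes f :: "'i \<Rightarrow> real^'n::finite \<Rightarrow> real"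
  assumes "finite S" "\<And>i. i \<in> S \<Longrightarrow> f i differentiable (at y)"
  shows "pd a (\<lambda>y. \<Sum>i\<in>S. f i y) y = (\<Sum>i\<in>S. pd a (f i) y)"
  using assms
proof (induction S rule: finite_induct)
  case empty then show ?case by (simp add: pd_const)
next
  case (insert i S)
  have d: "(\<lambda>y. \<Sum>i\<in>S. f i y) differentiable (at y)"
    using insert by (intro differentiable_sum) auto
  have "pd a (\<lambda>y. \<Sum>i\<in>insert i S. f i y) y = pd a (\<lambda>y. f i y + (\<Sum>i\<in>S. f i y)) y"
    using insert by simp
  also have "\<dots> = pd a (f i) y + pd a (\<lambda>y. \<Sum>i\<in>S. f i y) y"
    using insert d by (intro pd_add) auto
  finally show ?case using insert by simp
qed

lemma ipd_snoc: "ipd (as @ [a]) f = ipd as (pd a f)"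
  by (induction as) auto

lemma ipd_cong:
  fixes f :: "real^'n::finite \<Rightarrow> real"
  assumes "open U" "\<And>y. y \<in> U \<Longrightarrow> f y = h y" "y \<in> U"
  shows "ipd as f y = ipd as h y"
  using assms(3)
proof (induction as arbitrary: y)
  case Nil then show ?case using assms by simp
next
  case (Cons a as)
  show ?case by simp (rule pd_local[OF assms(1) Cons.prems Cons.IH])
qed

definition sm :: "(real^'n::finite) set \<Rightarrow> nat \<Rightarrow> (real^'n \<Rightarrow> real) \<Rightarrow> bool" where
  "sm U n f \<longleftrightarrow> (\<forall>as. length as \<le> n \<longrightarrow> (\<forall>x\<in>U. ipd as f differentiable (at x)))"

lemma sm_0: "sm U 0 f \<longleftrightarrow> (\<forall>x\<in>U. f differentiable (at x))"
  unfolding sm_def by simp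

lemma sm_mono: "sm U n f \<Longrightarrow> m \<le> n \<Longrightarrow> sm U m f"
  unfolding sm_def by auto

lemma sm_Suc: "sm U (Suc n) f \<longleftrightarrow> sm U 0 f \<and> (\<forall>a. sm U n (pd a f))"
proof
  assume A: "sm U (Suc n) f"
  show "sm U 0 f \<and> (\<forall>a. sm U n (pd a f))"
  proof
    show "sm U 0 f" using A sm_mono by blast
    show "\<forall>a. sm U n (pd a f)"
      unfolding sm_def
    proof (intro allI impI ballI)
      fix a and as :: "'a list" and x assume "length as \<le> n" "x \<in> U"
      then have "ipd (as @ [a]) f differentiable (at x)" using A unfolding sm_def by simp
      then show "ipd as (pd a f) differentiable (at x)" by (simp add: ipd_snoc)
    qed
  qed
next
  assume A: "sm U 0 f \<and> (\<forall>a. sm U n (pd a f))"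
  show "sm U (Suc n) f"
    unfolding sm_def
  proof (intro allI impI ballI)
    fix as :: "'a list" and x assume l: "length as \<le> Suc n" and x: "x \<in> U"
    show "ipd as f differentiable (at x)"
    proof (cases as rule: rev_exhaust)
      case Nil then show ?thesis using A x by (simp add: sm_0)
    next
      case (snoc bs a)
      then show ?thesis using A l x unfolding sm_def by (simp add: ipd_snoc)
    qed
  qed
qed

lemma smooth_sm: "smooth_on U f \<longleftrightarrow> (\<forall>n. sm U n f)"
  unfolding smooth_on_def sm_def by auto

lemma sm_cong:
  assumes "open U" "\<And>y. y \<in> U \<Longrightarrow> f y = h y" "sm U n f"
  shows "sm U n h"
  unfolding sm_def
proof (intro allI impI ballI)
  fix as :: "'a list" and x assume l: "length as \<le> n" and x: "x \<in> U"
  then obtain D where D: "(ipd as f has_derivative D) (at x)"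
    using assms(3) unfolding sm_def differentiable_def by blast
  have "(ipd as h has_derivative D) (at x)"
    by (rule has_derivative_transform_within_open[OF D assms(1) x]) (use ipd_cong[OF assms(1,2)] in auto)
  then show "ipd as h differentiable (at x)" unfolding differentiable_def by blast
qed

lemma sm_const: "sm U n (\<lambda>y. c)"
proof (induction n arbitrary: c)
  case 0 then show ?case by (simp add: sm_0)
next
  case (Suc n)
  have e: "pd a (\<lambda>y. c) = (\<lambda>y. 0)" for a by (rule ext) (simp add: pd_const)
  have "sm U 0 (\<lambda>y. c)" by (simp add: sm_0)
  then show ?case unfolding sm_Suc e using Suc.IH by simp
qed

lemma sm_add:
  assumes "open U" shows "sm U n f \<Longrightarrow> sm U n h \<Longrightarrow> sm U n (\<lambda>y. f y + h y)"
proof (induction n arbitrary: f h)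
  case 0 then show ?case by (simp add: sm_0 differentiable_add)
next
  case (Suc n)
  have f0: "sm U 0 f" "sm U 0 h" "\<And>a. sm U n (pd a f)" "\<And>a. sm U n (pd a h)"
    using Suc.prems unfolding sm_Suc by auto
  have "sm U n (pd a (\<lambda>y. f y + h y))" for a
  proof -
    have "sm U n (\<lambda>y. pd a f y + pd a h y)" using Suc.IH f0 by blast
    moreover have "\<And>y. y \<in> U \<Longrightarrow> pd a f y + pd a h y = pd a (\<lambda>y. f y + h y) y"
      using f0 unfolding sm_0 by (intro pd_add[symmetric]) auto
    ultimately show ?thesis by (rule sm_cong[OF assms, rotated])
  qed
  moreover have "sm U 0 (\<lambda>y. f y + h y)" using f0 by (simp add: sm_0 differentiable_add)
  ultimately show ?case unfolding sm_Suc by blast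
qed

lemma sm_minus:
  assumes "open U" shows "sm U n f \<Longrightarrow> sm U n (\<lambda>y. - f y)"
proof (induction n arbitrary: f)
  case 0 then show ?case by (simp add: sm_0 differentiable_minus)
next
  case (Suc n)
  have f0: "sm U 0 f" "\<And>a. sm U n (pd a f)"
    using Suc.prems unfolding sm_Suc by auto
  have "sm U n (pd a (\<lambda>y. - f y))" for a
  proof -
    have "sm U n (\<lambda>y. - pd a f y)" using Suc.IH f0 by blast
    moreover have "\<And>y. y \<in> U \<Longrightarrow> - pd a f y = pd a (\<lambda>y. - f y) y"
      using f0 unfolding sm_0 by (intro pd_minus[symmetric]) auto
    ultimately show ?thesis by (rule sm_cong[OF assms, rotated])
  qed
  moreover have "sm U 0 (\<lambda>y. - f y)" using f0 by (simp add: sm_0 differentiable_minus)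
  ultimately show ?case unfolding sm_Suc by blast
qed

lemma sm_mult:
  assumes "open U" shows "sm U n f \<Longrightarrow> sm U n h \<Longrightarrow> sm U n (\<lambda>y. f y * h y)"
proof (induction n arbitrary: f h)
  case 0 then show ?case by (simp add: sm_0 differentiable_mult)
next
  case (Suc n)
  have f0: "sm U 0 f" "sm U 0 h" "\<And>a. sm U n (pd a f)" "\<And>a. sm U n (pd a h)"
    using Suc.prems unfolding sm_Suc by auto
  have fn: "sm U n f" "sm U n h" using Suc.prems sm_mono[of U "Suc n" _ n] by auto
  have "sm U n (pd a (\<lambda>y. f y * h y))" for a
  proof -
    have "sm U n (\<lambda>y. pd a f y * h y)" using Suc.IH f0 fn by blast
    moreover have "sm U n (\<lambda>y. f y * pd a h y)" using Suc.IH f0 fn by blast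
    ultimately have "sm U n (\<lambda>y. pd a f y * h y + f y * pd a h y)" by (rule sm_add[OF assms])
    moreover have "\<And>y. y \<in> U \<Longrightarrow> pd a f y * h y + f y * pd a h y = pd a (\<lambda>y. f y * h y) y"
      using f0 unfolding sm_0 by (intro pd_mult[symmetric]) auto
    ultimately show ?thesis by (rule sm_cong[OF assms, rotated])
  qed
  moreover have "sm U 0 (\<lambda>y. f y * h y)" using f0 by (simp add: sm_0 differentiable_mult)
  ultimately show ?case unfolding sm_Suc by blast
qed

lemma pd_inverse:
  fixes f :: "real^'n::finite \<Rightarrow> real"
  assumes "f differentiable (at y)" "f y \<noteq> 0"
  shows "pd a (\<lambda>y. inverse (f y)) y = - (inverse (f y) * pd a f y * inverse (f y))"
proof -
  obtain D1 where d: "(f has_derivative D1) (at y)"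
    using assms unfolding differentiable_def by blast
  have "((\<lambda>y. inverse (f y)) has_derivative (\<lambda>h. - (inverse (f y) * D1 h * inverse (f y)))) (at y)"
    using assms(2) d by (rule Deriv.has_derivative_inverse)
  then show ?thesis using pd_eq d by metis
qed

lemma sm_inverse:
  assumes "open U" "\<And>y. y \<in> U \<Longrightarrow> f y \<noteq> 0"
  shows "sm U n f \<Longrightarrow> sm U n (\<lambda>y. inverse (f y))"
proof (induction n)
  case 0 then show ?case unfolding sm_0 by (intro ballI Deriv.differentiable_inverse) (use assms(2) in auto)
next
  case (Suc n)
  have f0: "sm U 0 f" "\<And>a. sm U n (pd a f)"
    using Suc.prems unfolding sm_Suc by auto
  have fn: "sm U n f" using Suc.prems sm_mono[of U "Suc n" _ n] by auto
  have i: "sm U n (\<lambda>y. inverse (f y))" using Suc.IH fn by blast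
  have "sm U n (pd a (\<lambda>y. inverse (f y)))" for a
  proof -
    have "sm U n (\<lambda>y. inverse (f y) * pd a f y)" using sm_mult[OF assms(1) i f0(2)] by blast
    then have "sm U n (\<lambda>y. inverse (f y) * pd a f y * inverse (f y))" using sm_mult[OF assms(1) _ i] by blast
    then have "sm U n (\<lambda>y. - (inverse (f y) * pd a f y * inverse (f y)))" by (rule sm_minus[OF assms(1)])
    moreover have "\<And>y. y \<in> U \<Longrightarrow> - (inverse (f y) * pd a f y * inverse (f y)) = pd a (\<lambda>y. inverse (f y)) y"
      using f0 assms unfolding sm_0 by (intro pd_inverse[symmetric]) auto
    ultimately show ?thesis by (rule sm_cong[OF assms(1), rotated])
  qed
  moreover have "sm U 0 (\<lambda>y. inverse (f y))" using f0 unfolding sm_0 by (intro ballI Deriv.differentiable_inverse) (use assms(2) in auto)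
  ultimately show ?case unfolding sm_Suc by blast
qed

lemma sm_sum:
  assumes "open U" "finite S"
  shows "(\<And>i. i \<in> S \<Longrightarrow> sm U n (f i)) \<Longrightarrow> sm U n (\<lambda>y. \<Sum>i\<in>S. f i y)"
  using assms(2)
proof (induction S rule: finite_induct)
  case empty then show ?case by (simp add: sm_const)
next
  case (insert i S)
  then show ?case by (simp add: sm_add[OF assms(1)])
qed

lemma sm_prod:
  assumes "open U" "finite S"
  shows "(\<And>i. i \<in> S \<Longrightarrow> sm U n (f i)) \<Longrightarrow> sm U n (\<lambda>y. \<Prod>i\<in>S. f i y)"
  using assms(2)
proof (induction S rule: finite_induct)
  case empty then show ?case by (simp add: sm_const)
next
  case (insert i S)
  then show ?case by (simp add: sm_mult[OF assms(1)])
qed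

lemma smooth_const: "smooth_on U (\<lambda>y. c)"
  unfolding smooth_sm by (simp add: sm_const)
lemma smooth_add: "open U \<Longrightarrow> smooth_on U f \<Longrightarrow> smooth_on U h \<Longrightarrow> smooth_on U (\<lambda>y. f y + h y)"
  unfolding smooth_sm by (simp add: sm_add)
lemma smooth_minus: "open U \<Longrightarrow> smooth_on U f \<Longrightarrow> smooth_on U (\<lambda>y. - f y)"
  unfolding smooth_sm by (simp add: sm_minus)
lemma smooth_mult: "open U \<Longrightarrow> smooth_on U f \<Longrightarrow> smooth_on U h \<Longrightarrow> smooth_on U (\<lambda>y. f y * h y)"
  unfolding smooth_sm by (simp add: sm_mult)
lemma smooth_diff: "open U \<Longrightarrow> smooth_on U f \<Longrightarrow> smooth_on U h \<Longrightarrow> smooth_on U (\<lambda>y. f y - h y)"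
  using smooth_add[of U f "\<lambda>y. - h y"] smooth_minus[of U h] by simp
lemma smooth_inverse: "open U \<Longrightarrow> (\<And>y. y \<in> U \<Longrightarrow> f y \<noteq> 0) \<Longrightarrow> smooth_on U f \<Longrightarrow> smooth_on U (\<lambda>y. inverse (f y))"
  unfolding smooth_sm by (simp add: sm_inverse)
lemma smooth_sum: "open U \<Longrightarrow> finite S \<Longrightarrow> (\<And>i. i \<in> S \<Longrightarrow> smooth_on U (f i)) \<Longrightarrow> smooth_on U (\<lambda>y. \<Sum>i\<in>S. f i y)"
  unfolding smooth_sm by (simp add: sm_sum)
lemma smooth_prod: "open U \<Longrightarrow> finite S \<Longrightarrow> (\<And>i. i \<in> S \<Longrightarrow> smooth_on U (f i)) \<Longrightarrow> smooth_on U (\<lambda>y. \<Prod>i\<in>S. f i y)"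
  unfolding smooth_sm by (simp add: sm_prod)
lemma smooth_pd: "smooth_on U f \<Longrightarrow> smooth_on U (pd a f)"
  unfolding smooth_sm using sm_Suc by blast
lemma smooth_diffble: "smooth_on U f \<Longrightarrow> y \<in> U \<Longrightarrow> f differentiable (at y)"
  unfolding smooth_sm using sm_0 by blast
lemma smooth_cong: "open U \<Longrightarrow> (\<And>y. y \<in> U \<Longrightarrow> f y = h y) \<Longrightarrow> smooth_on U f \<Longrightarrow> smooth_on U h"
  unfolding smooth_sm using sm_cong by blast

lemma schwarz_half:
  fixes f :: "real^'n::finite \<Rightarrow> real"
  assumes U: "open U" "x \<in> U" and fd: "\<And>y. y \<in> U \<Longrightarrow> f differentiable (at y)"
    and Da: "(pd a f has_derivative Da) (at x)" and e: "\<epsilon> > 0"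
  shows "\<exists>d>0. \<forall>h. 0 < h \<and> h < d \<longrightarrow>
    \<bar>f (x + h *\<^sub>R axis b 1 + h *\<^sub>R axis a 1) - f (x + h *\<^sub>R axis a 1) - f (x + h *\<^sub>R axis b 1) + f x
      - h^2 * Da (axis b 1)\<bar> \<le> 3 * \<epsilon> * h^2"
proof -
  obtain d1 where d1: "d1 > 0" "\<And>y. norm (y - x) < d1 \<Longrightarrow>
      \<bar>pd a f y - pd a f x - Da (y - x)\<bar> \<le> \<epsilon> * norm (y - x)"
    using Da e unfolding has_derivative_at_alt by (auto simp: real_norm_def)
  obtain d3 where d3: "d3 > 0" "ball x d3 \<subseteq> U" using U open_contains_ball by blast
  have lin: "linear Da" using Da has_derivative_linear by blast
  define ea :: "real^'n" where "ea = axis a 1"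
  define eb :: "real^'n" where "eb = axis b 1"
  have nea: "norm ea = 1" "norm eb = 1" by (simp_all add: ea_def eb_def)
  show ?thesis
  proof (intro exI[of _ "min d1 d3 / 2"] conjI allI impI)
    show "min d1 d3 / 2 > 0" using d1 d3 by simp
    fix h :: real assume h: "0 < h \<and> h < min d1 d3 / 2"
    have nb: "norm (h *\<^sub>R eb + s *\<^sub>R ea) \<le> 2 * h" "norm (s *\<^sub>R ea) \<le> h" if "0 \<le> s" "s \<le> h" for s
    proof -
      have "norm (h *\<^sub>R eb + s *\<^sub>R ea) \<le> norm (h *\<^sub>R eb) + norm (s *\<^sub>R ea)" by (rule norm_triangle_ineq)
      also have "\<dots> = h + s" using nea h that by simp
      finally show "norm (h *\<^sub>R eb + s *\<^sub>R ea) \<le> 2 * h" using that by simp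
      show "norm (s *\<^sub>R ea) \<le> h" using nea that by simp
    qed
    have dx: "dist x (x + w) = norm w" for w :: "real^'n"
      by (metis add_diff_cancel_left' dist_norm dist_commute)
    have inU: "x + h *\<^sub>R eb + s *\<^sub>R ea \<in> U" "x + s *\<^sub>R ea \<in> U" if "0 \<le> s" "s \<le> h" for s
    proof -
      have "dist x (x + h *\<^sub>R eb + s *\<^sub>R ea) < d3"
        using nb[OF that] h by (simp add: dx add.assoc)
      then show "x + h *\<^sub>R eb + s *\<^sub>R ea \<in> U" using d3 by auto
      have "dist x (x + s *\<^sub>R ea) < d3"
        using nb[OF that] h by (simp add: dx)
      then show "x + s *\<^sub>R ea \<in> U" using d3 by auto
    qed
    define \<phi> where "\<phi> s = f (x + h *\<^sub>R eb + s *\<^sub>R ea) - f (x + s *\<^sub>R ea)" for s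
    have der: "(\<phi> has_real_derivative (pd a f (x + h *\<^sub>R eb + s *\<^sub>R ea) - pd a f (x + s *\<^sub>R ea))) (at s)"
      if s0: "0 \<le> s" "s \<le> h" for s
    proof -
      obtain D1 where D1: "(f has_derivative D1) (at (x + h *\<^sub>R eb + s *\<^sub>R ea))"
        using fd inU[OF s0] unfolding differentiable_def by blast
      obtain D2 where D2: "(f has_derivative D2) (at (x + s *\<^sub>R ea))"
        using fd inU[OF s0] unfolding differentiable_def by blast
      have "((\<lambda>s. f (x + h *\<^sub>R eb + s *\<^sub>R ea)) has_real_derivative D1 ea) (at s)"
        by (rule line_deriv[OF D1])
      moreover have "((\<lambda>s. f (x + s *\<^sub>R ea)) has_real_derivative D2 ea) (at s)"
        by (rule line_deriv[OF D2])
      ultimately have "(\<phi> has_real_derivative (D1 ea - D2 ea)) (at s)"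
        unfolding \<phi>_def by (rule DERIV_diff)
      moreover have "pd a f (x + h *\<^sub>R eb + s *\<^sub>R ea) = D1 ea" using pd_eq[OF D1] ea_def by simp
      moreover have "pd a f (x + s *\<^sub>R ea) = D2 ea" using pd_eq[OF D2] ea_def by simp
      ultimately show ?thesis by simp
    qed
    obtain \<xi> where xi: "0 < \<xi>" "\<xi> < h"
      "\<phi> h - \<phi> 0 = (h - 0) * (pd a f (x + h *\<^sub>R eb + \<xi> *\<^sub>R ea) - pd a f (x + \<xi> *\<^sub>R ea))"
      using MVT2[of 0 h \<phi> "\<lambda>s. pd a f (x + h *\<^sub>R eb + s *\<^sub>R ea) - pd a f (x + s *\<^sub>R ea)"] h der
      by auto
    define v1 where "v1 = h *\<^sub>R eb + \<xi> *\<^sub>R ea"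
    define v2 where "v2 = \<xi> *\<^sub>R ea"
    have p1: "x + h *\<^sub>R eb + \<xi> *\<^sub>R ea = x + v1" by (simp add: v1_def add.assoc)
    have n1: "norm v1 \<le> 2 * h" "norm v2 \<le> h" using nb[of \<xi>] xi by (auto simp: v1_def v2_def)
    have b1: "\<bar>pd a f (x + v1) - pd a f x - Da v1\<bar> \<le> \<epsilon> * (2 * h)"
    proof -
      have "\<bar>pd a f (x + v1) - pd a f x - Da v1\<bar> \<le> \<epsilon> * norm v1"
        using d1(2)[of "x + v1"] n1 h by simp
      also have "\<dots> \<le> \<epsilon> * (2 * h)" using n1 e by (intro mult_left_mono) auto
      finally show ?thesis .
    qed
    have b2: "\<bar>pd a f (x + v2) - pd a f x - Da v2\<bar> \<le> \<epsilon> * h"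
    proof -
      have "\<bar>pd a f (x + v2) - pd a f x - Da v2\<bar> \<le> \<epsilon> * norm v2"
        using d1(2)[of "x + v2"] n1 h by simp
      also have "\<dots> \<le> \<epsilon> * h" using n1 e by (intro mult_left_mono) auto
      finally show ?thesis .
    qed
    have lv: "Da v1 - Da v2 = h * Da eb"
      unfolding v1_def v2_def using lin by (simp add: linear_add linear_scale)
    have A: "\<bar>(pd a f (x + v1) - pd a f (x + v2)) - h * Da eb\<bar> \<le> 3 * \<epsilon> * h"
      using b1 b2 lv by (simp add: abs_le_iff)
    have B: "h * (pd a f (x + v1) - pd a f (x + v2)) - h^2 * Da eb = h * ((pd a f (x + v1) - pd a f (x + v2)) - h * Da eb)"
      by (simp add: power2_eq_square right_diff_distrib)
    have "\<bar>h * (pd a f (x + v1) - pd a f (x + v2)) - h^2 * Da eb\<bar> = h * \<bar>(pd a f (x + v1) - pd a f (x + v2)) - h * Da eb\<bar>"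
      unfolding B using h by (simp add: abs_mult)
    also have "\<dots> \<le> h * (3 * \<epsilon> * h)" using A h by (intro mult_left_mono) auto
    also have "\<dots> = 3 * \<epsilon> * h^2" by (simp add: power2_eq_square)
    finally have "\<bar>h * (pd a f (x + v1) - pd a f (x + v2)) - h^2 * Da eb\<bar> \<le> 3 * \<epsilon> * h^2" .
    moreover have "\<phi> h - \<phi> 0 = h * (pd a f (x + v1) - pd a f (x + v2))"
      using xi(3) p1 by (simp add: v2_def)
    moreover have "\<phi> h - \<phi> 0 = f (x + h *\<^sub>R axis b 1 + h *\<^sub>R axis a 1) - f (x + h *\<^sub>R axis a 1)
         - f (x + h *\<^sub>R axis b 1) + f x"
      by (simp add: \<phi>_def ea_def eb_def)
    ultimately show "\<bar>f (x + h *\<^sub>R axis b 1 + h *\<^sub>R axis a 1) - f (x + h *\<^sub>R axis a 1) - f (x + h *\<^sub>R axis b 1) + f x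
      - h^2 * Da (axis b 1)\<bar> \<le> 3 * \<epsilon> * h^2" by (simp add: eb_def)
  qed
qed

lemma schwarz:
  fixes f :: "real^'n::finite \<Rightarrow> real"
  assumes U: "open U" "x \<in> U" and sf: "smooth_on U f"
  shows "pd b (pd a f) x = pd a (pd b f) x"
proof (rule ccontr)
  assume ne: "pd b (pd a f) x \<noteq> pd a (pd b f) x"
  have fd: "\<And>y. y \<in> U \<Longrightarrow> f differentiable (at y)" using sf smooth_diffble by blast
  obtain Da where Da: "(pd a f has_derivative Da) (at x)"
    using smooth_diffble[OF smooth_pd[OF sf] U(2)] unfolding differentiable_def by blast
  obtain Db where Db: "(pd b f has_derivative Db) (at x)"
    using smooth_diffble[OF smooth_pd[OF sf] U(2)] unfolding differentiable_def by blast
  have pba: "pd b (pd a f) x = Da (axis b 1)" by (rule pd_eq[OF Da])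
  have pab: "pd a (pd b f) x = Db (axis a 1)" by (rule pd_eq[OF Db])
  define \<delta> where "\<delta> = \<bar>Da (axis b 1) - Db (axis a 1)\<bar>"
  have dpos: "\<delta> > 0" using ne pba pab by (simp add: \<delta>_def)
  obtain d1 where d1: "d1 > 0" "\<And>h. 0 < h \<and> h < d1 \<Longrightarrow>
    \<bar>f (x + h *\<^sub>R axis b 1 + h *\<^sub>R axis a 1) - f (x + h *\<^sub>R axis a 1) - f (x + h *\<^sub>R axis b 1) + f x
      - h^2 * Da (axis b 1)\<bar> \<le> 3 * (\<delta>/12) * h^2"
    using schwarz_half[OF U fd Da, of "\<delta>/12" b] dpos by auto
  obtain d2 where d2: "d2 > 0" "\<And>h. 0 < h \<and> h < d2 \<Longrightarrow>
    \<bar>f (x + h *\<^sub>R axis a 1 + h *\<^sub>R axis b 1) - f (x + h *\<^sub>R axis b 1) - f (x + h *\<^sub>R axis a 1) + f x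
      - h^2 * Db (axis a 1)\<bar> \<le> 3 * (\<delta>/12) * h^2"
    using schwarz_half[OF U fd Db, of "\<delta>/12" a] dpos by auto
  define h where "h = min d1 d2 / 2"
  have h: "0 < h" "h < d1" "h < d2" using d1 d2 by (auto simp: h_def)
  define X where "X = f (x + h *\<^sub>R axis b 1 + h *\<^sub>R axis a 1) - f (x + h *\<^sub>R axis a 1) - f (x + h *\<^sub>R axis b 1) + f x"
  have X2: "f (x + h *\<^sub>R axis a 1 + h *\<^sub>R axis b 1) - f (x + h *\<^sub>R axis b 1) - f (x + h *\<^sub>R axis a 1) + f x = X"
    unfolding X_def by (simp add: add_ac)
  have b1: "\<bar>X - h^2 * Da (axis b 1)\<bar> \<le> 3 * (\<delta>/12) * h^2" using d1(2)[of h] h unfolding X_def by simp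
  have b2: "\<bar>X - h^2 * Db (axis a 1)\<bar> \<le> 3 * (\<delta>/12) * h^2" using d2(2)[of h] h X2 by simp
  have "\<bar>h^2 * Da (axis b 1) - h^2 * Db (axis a 1)\<bar> \<le> \<delta>/2 * h^2"
  proof -
    have e1: "3 * (\<delta>/12) * h^2 = (\<delta>*h^2)/4" "\<delta>/2*h^2 = (\<delta>*h^2)/2" by simp_all
    show ?thesis using b1 b2 unfolding e1 by arith
  qed
  moreover have "\<bar>h^2 * Da (axis b 1) - h^2 * Db (axis a 1)\<bar> = h^2 * \<delta>"
    unfolding \<delta>_def by (simp add: right_diff_distrib[symmetric] abs_mult)
  ultimately have "h^2 * \<delta> \<le> \<delta>/2 * h^2" by simp
  moreover have "h^2 > 0" using h by simp
  ultimately show False using dpos by (simp add: mult_le_cancel_left_pos field_simps)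
qed



lemma sum_delta_r [simp]: "(\<Sum>m\<in>UNIV. F m * (if m = d then 1 else 0)) = (F (d::'a::finite) :: real)"
proof -
  have "(\<Sum>m\<in>UNIV. F m * (if m = d then 1 else 0)) = (\<Sum>m\<in>UNIV. if m = d then F m else 0)"
    by (rule sum.cong) auto
  then show ?thesis by simp
qed

lemma sum_delta_l [simp]: "(\<Sum>m\<in>UNIV. (if m = d then 1 else 0) * F m) = (F (d::'a::finite) :: real)"
proof -
  have "(\<Sum>m\<in>UNIV. (if m = d then 1 else 0) * F m) = (\<Sum>m\<in>UNIV. if m = d then F m else 0)"
    by (rule sum.cong) auto
  then show ?thesis by simp
qed

lemma sum_delta_r' [simp]: "(\<Sum>m\<in>UNIV. F m * (if d = m then 1 else 0)) = (F (d::'a::finite) :: real)"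
proof -
  have "(\<Sum>m\<in>UNIV. F m * (if d = m then 1 else 0)) = (\<Sum>m\<in>UNIV. if m = d then F m else 0)"
    by (rule sum.cong) auto
  then show ?thesis by simp
qed

lemma sum_delta_l' [simp]: "(\<Sum>m\<in>UNIV. (if d = m then 1 else 0) * F m) = (F (d::'a::finite) :: real)"
proof -
  have "(\<Sum>m\<in>UNIV. (if d = m then 1 else 0) * F m) = (\<Sum>m\<in>UNIV. if m = d then F m else 0)"
    by (rule sum.cong) auto
  then show ?thesis by simp
qed

lemma smooth_if: "smooth_on U f \<Longrightarrow> smooth_on U h \<Longrightarrow> smooth_on U (\<lambda>y. if P then f y else h y)"
  by (cases P) auto

definition gmat :: "(real^'n::finite \<Rightarrow> 'n \<Rightarrow> 'n \<Rightarrow> real) \<Rightarrow> real^'n \<Rightarrow> real^'n^'n" where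
  "gmat g y = (\<chi> k l. g y k l)"

lemma ginv_gmat: "ginv g y i j = matrix_inv (gmat g y) $ i $ j"
  by (simp add: ginv_def gmat_def)

locale rmetric =
  fixes U :: "(real^'n::finite) set" and g :: "real^'n \<Rightarrow> 'n \<Rightarrow> 'n \<Rightarrow> real"
  assumes rm: "riemannian_metric_on U g"
begin

lemma U_open: "open U" using rm unfolding riemannian_metric_on_def by blast
lemma g_smooth: "smooth_on U (\<lambda>y. g y i j)" using rm unfolding riemannian_metric_on_def by blast
lemma g_sym: "y \<in> U \<Longrightarrow> g y i j = g y j i" using rm unfolding riemannian_metric_on_def by blast
lemma g_pos: "y \<in> U \<Longrightarrow> v \<noteq> 0 \<Longrightarrow> (\<Sum>i\<in>UNIV. \<Sum>j\<in>UNIV. g y i j * v$i * v$j) > 0"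
  using rm unfolding riemannian_metric_on_def by blast

lemma det_nz: assumes "y \<in> U" shows "det (gmat g y) \<noteq> 0"
proof -
  have lin: "linear ((*v) (gmat g y))" by (rule matrix_vector_mul_linear)
  have "inj ((*v) (gmat g y))"
    unfolding linear_injective_0[OF lin]
  proof (intro allI impI)
    fix v :: "real^'n" assume z: "gmat g y *v v = 0"
    show "v = 0"
    proof (rule ccontr)
      assume "v \<noteq> 0"
      then have p: "(\<Sum>i\<in>UNIV. \<Sum>j\<in>UNIV. g y i j * v$i * v$j) > 0" using g_pos assms by blast
      have "(\<Sum>i\<in>UNIV. \<Sum>j\<in>UNIV. g y i j * v$i * v$j) = (\<Sum>i\<in>UNIV. v$i * (gmat g y *v v)$i)"
        by (simp add: matrix_vector_mult_def gmat_def sum_distrib_left mult_ac)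
      also have "\<dots> = 0" using z by simp
      finally show False using p by simp
    qed
  qed
  then show ?thesis using det_nz_iff_inj[OF lin] by simp
qed

lemma inv_props: assumes "y \<in> U"
  shows "gmat g y ** matrix_inv (gmat g y) = mat 1" "matrix_inv (gmat g y) ** gmat g y = mat 1"
proof -
  have "invertible (gmat g y)" using det_nz[OF assms] invertible_det_nz by blast
  then obtain B where "gmat g y ** B = mat 1 \<and> B ** gmat g y = mat 1" unfolding invertible_def by blast
  then have "gmat g y ** matrix_inv (gmat g y) = mat 1 \<and> matrix_inv (gmat g y) ** gmat g y = mat 1"
    unfolding matrix_inv_def by (rule someI)
  then show "gmat g y ** matrix_inv (gmat g y) = mat 1" "matrix_inv (gmat g y) ** gmat g y = mat 1" by auto
qed

lemma ginv_sym: assumes "y \<in> U" shows "ginv g y i j = ginv g y j i"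
proof -
  define B where "B = matrix_inv (gmat g y)"
  have tG: "transpose (gmat g y) = gmat g y"
    using g_sym[OF assms] by (simp add: transpose_def gmat_def vec_eq_iff)
  have "transpose B ** gmat g y = transpose (transpose (gmat g y) ** B)"
    by (simp add: matrix_transpose_mul)
  also have "\<dots> = mat 1" using inv_props[OF assms] tG by (simp add: B_def)
  finally have 1: "transpose B ** gmat g y = mat 1" .
  have "transpose B = transpose B ** (gmat g y ** B)" using inv_props[OF assms] by (simp add: B_def)
  also have "\<dots> = B" using 1 by (simp add: matrix_mul_assoc)
  finally have "transpose B = B" .
  then have "transpose B $ j $ i = B $ j $ i" by simp
  then show ?thesis by (simp add: ginv_gmat B_def transpose_def)
qed

lemma g_ginv: assumes "y \<in> U" shows "(\<Sum>k\<in>UNIV. g y i k * ginv g y k j) = (if i = j then 1 else 0)"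
proof -
  have "(\<Sum>k\<in>UNIV. g y i k * ginv g y k j) = (gmat g y ** matrix_inv (gmat g y)) $ i $ j"
    by (simp add: matrix_matrix_mult_def ginv_gmat) (simp add: gmat_def)
  also have "\<dots> = mat 1 $ i $ j" using inv_props[OF assms] by simp
  also have "\<dots> = (if i = j then 1 else 0)" by (simp add: mat_def)
  finally show ?thesis .
qed

lemma ginv_g: assumes "y \<in> U" shows "(\<Sum>k\<in>UNIV. ginv g y i k * g y k j) = (if i = j then 1 else 0)"
proof -
  have "(\<Sum>k\<in>UNIV. ginv g y i k * g y k j) = (matrix_inv (gmat g y) ** gmat g y) $ i $ j"
    by (simp add: matrix_matrix_mult_def ginv_gmat) (simp add: gmat_def)
  also have "\<dots> = mat 1 $ i $ j" using inv_props[OF assms] by simp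
  also have "\<dots> = (if i = j then 1 else 0)" by (simp add: mat_def)
  finally show ?thesis .
qed

lemma smooth_det:
  assumes "\<And>i j. smooth_on U (\<lambda>y. M y $ i $ j)"
  shows "smooth_on U (\<lambda>y. det (M y :: real^'n^'n))"
  unfolding det_def
  by (intro smooth_sum smooth_mult smooth_prod U_open finite_permutations smooth_const assms) auto

lemma ginv_cramer: assumes "y \<in> U"
  shows "ginv g y i j = det (\<chi> r c. if c = i then (if r = j then 1 else 0) else g y r c) * inverse (det (gmat g y))"
proof -
  define B where "B = matrix_inv (gmat g y)"
  have "gmat g y *v (B *v axis j 1) = axis j 1"
    using inv_props[OF assms] by (simp add: matrix_vector_mul_assoc B_def)
  then have "B *v axis j 1 = (\<chi> k. det(\<chi> r c. if c = k then (axis j 1 :: real^'n)$r else gmat g y$r$c) / det (gmat g y))"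
    using cramer[OF det_nz[OF assms]] by blast
  then have "(B *v axis j 1) $ i = det(\<chi> r c. if c = i then (axis j 1 :: real^'n)$r else gmat g y$r$c) / det (gmat g y)"
    by simp
  moreover have "(B *v axis j 1) $ i = B $ i $ j"
    by (simp add: matrix_vector_mult_def axis_def)
  moreover have "(\<chi> r c. if c = i then (axis j 1 :: real^'n)$r else gmat g y$r$c) =
      (\<chi> r c. if c = i then (if r = j then 1 else 0) else g y r c)"
    unfolding axis_def gmat_def by (simp add: vec_eq_iff)
  ultimately show ?thesis by (simp add: ginv_gmat B_def divide_inverse)
qed

lemma ginv_smooth: "smooth_on U (\<lambda>y. ginv g y i j)"
proof (rule smooth_cong[OF U_open])
  show "smooth_on U (\<lambda>y. det (\<chi> r c. if c = i then (if r = j then 1 else 0) else g y r c) * inverse (det (gmat g y)))"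
  proof (intro smooth_mult smooth_inverse U_open)
    show "smooth_on U (\<lambda>y. det (\<chi> r c. if c = i then (if r = j then 1 else 0) else g y r c))"
      by (rule smooth_det) (auto intro!: smooth_if simp: smooth_const g_smooth)
    show "smooth_on U (\<lambda>y. det (gmat g y))"
      by (rule smooth_det) (simp add: gmat_def g_smooth)
    show "\<And>y. y \<in> U \<Longrightarrow> det (gmat g y) \<noteq> 0" by (rule det_nz)
  qed
  show "\<And>y. y \<in> U \<Longrightarrow> det (\<chi> r c. if c = i then (if r = j then 1 else 0) else g y r c) * inverse (det (gmat g y)) = ginv g y i j"
    by (simp add: ginv_cramer)
qed


lemma Gamma_smooth: "smooth_on U (\<lambda>y. Gamma g y a b c)"
  unfolding Gamma_def
  by (intro smooth_mult smooth_const smooth_sum smooth_add smooth_diff smooth_pd ginv_smooth g_smooth U_open) auto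

lemma pd_g_sym: "y \<in> U \<Longrightarrow> pd d (\<lambda>y. g y a b) y = pd d (\<lambda>y. g y b a) y"
  by (rule pd_local[OF U_open]) (auto intro: g_sym)

lemma Gamma_sym: "y \<in> U \<Longrightarrow> Gamma g y a b c = Gamma g y b a c"
  unfolding Gamma_def by (simp add: pd_g_sym[of y _ a b] add_ac)

lemma Gamma_low: assumes y: "y \<in> U"
  shows "(\<Sum>k\<in>UNIV. Gamma g y a c k * g y k d) =
     1/2 * (pd a (\<lambda>y. g y c d) y + pd c (\<lambda>y. g y a d) y - pd d (\<lambda>y. g y a c) y)"
proof -
  define P where "P m = pd a (\<lambda>y. g y c m) y + pd c (\<lambda>y. g y a m) y - pd m (\<lambda>y. g y a c) y" for m
  have "(\<Sum>k\<in>UNIV. Gamma g y a c k * g y k d) = (\<Sum>k\<in>UNIV. (1/2) * (\<Sum>m\<in>UNIV. ginv g y k m * P m) * g y k d)"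
    by (simp add: Gamma_def P_def)
  also have "\<dots> = (\<Sum>k\<in>UNIV. 1/2 * (\<Sum>m\<in>UNIV. P m * (ginv g y m k * g y k d)))"
  proof (rule sum.cong[OF refl])
    fix k
    have "(\<Sum>m\<in>UNIV. ginv g y k m * P m) * g y k d = (\<Sum>m\<in>UNIV. P m * (ginv g y m k * g y k d))"
      unfolding sum_distrib_right by (rule sum.cong[OF refl]) (simp add: ginv_sym[OF y, of k])
    then show "1 / 2 * (\<Sum>m\<in>UNIV. ginv g y k m * P m) * g y k d = 1 / 2 * (\<Sum>m\<in>UNIV. P m * (ginv g y m k * g y k d))"
      by simp
  qed
  also have "\<dots> = 1/2 * (\<Sum>k\<in>UNIV. \<Sum>m\<in>UNIV. P m * (ginv g y m k * g y k d))"
    by (simp add: sum_distrib_left)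
  also have "\<dots> = 1/2 * (\<Sum>m\<in>UNIV. P m * (\<Sum>k\<in>UNIV. ginv g y m k * g y k d))"
    by (subst sum.swap) (simp add: sum_distrib_left)
  also have "\<dots> = 1/2 * P d" by (simp add: ginv_g[OF y])
  finally show ?thesis by (simp add: P_def)
qed

lemma metric_compat: assumes y: "y \<in> U"
  shows "pd a (\<lambda>y. g y c d) y = (\<Sum>k\<in>UNIV. Gamma g y a c k * g y k d) + (\<Sum>k\<in>UNIV. Gamma g y a d k * g y c k)"
proof -
  have 1: "(\<Sum>k\<in>UNIV. Gamma g y a d k * g y c k) = (\<Sum>k\<in>UNIV. Gamma g y a d k * g y k c)"
    by (rule sum.cong[OF refl]) (simp add: g_sym[OF y, of c])
  have 2: "pd a (\<lambda>y. g y d c) y = pd a (\<lambda>y. g y c d) y" by (rule pd_g_sym[OF y])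
  show ?thesis unfolding 1 Gamma_low[OF y, of a c d] Gamma_low[OF y, of a d c] 2
    by (simp add: field_simps)
qed

lemma Rup_smooth: "smooth_on U (\<lambda>y. Rup g y a b c d)"
  unfolding Rup_def
  by (intro smooth_mult smooth_sum smooth_add smooth_diff smooth_pd Gamma_smooth U_open) auto

lemma Rlow_smooth: "smooth_on U (\<lambda>y. Rlow g y a b c d)"
  unfolding Rlow_def
  by (intro smooth_mult smooth_sum Rup_smooth g_smooth U_open) auto

lemma nabla_Cons: "nabla g T y (a # is) = pd a (\<lambda>y. T y is) y
   - (\<Sum>j<length is. \<Sum>k\<in>UNIV. Gamma g y a (is ! j) k * T y (is[j := k]))"
  by (simp add: nabla_def)

lemma nabla_smooth:
  assumes "\<And>is. smooth_on U (\<lambda>y. T y is)"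
  shows "smooth_on U (\<lambda>y. nabla g T y ids)"
proof (cases ids)
  case Nil then show ?thesis by (simp add: nabla_def smooth_const)
next
  case (Cons a js)
  show ?thesis unfolding Cons nabla_Cons
    by (intro smooth_mult smooth_sum smooth_diff smooth_pd Gamma_smooth assms U_open finite_lessThan) auto
qed

end


lemma sum_Suc_shift: "(\<Sum>i<Suc n. f i) = f 0 + (\<Sum>i<n. f (Suc i))"
  by (induction n) (simp_all add: add_ac)

lemma sum_split_one:
  assumes "finite S" "j \<in> S"
  shows "sum F S = F j + (\<Sum>i\<in>S. if i = j then 0 else F i)"
proof -
  have "sum F S = (\<Sum>i\<in>S. (if i = j then F i else 0) + (if i = j then 0 else F i))"
    by (rule sum.cong) auto
  also have "\<dots> = (\<Sum>i\<in>S. if i = j then F i else 0) + (\<Sum>i\<in>S. if i = j then 0 else F i)"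
    by (rule sum.distrib)
  also have "(\<Sum>i\<in>S. if i = j then F i else 0) = F j" using assms by (simp add: sum.delta')
  finally show ?thesis .
qed

context rmetric begin

lemma diffble: "smooth_on U f \<Longrightarrow> x \<in> U \<Longrightarrow> f differentiable (at x)"
  by (rule smooth_diffble)

lemma ricci_D:
  assumes x: "x \<in> U" and Tsm: "\<And>js. smooth_on U (\<lambda>y. T y js)"
  shows "nabla g (nabla g T) x (p # q # js) =
     pd p (pd q (\<lambda>y. T y js)) x
   - (\<Sum>j<length js. \<Sum>k\<in>UNIV. pd p (\<lambda>y. Gamma g y q (js!j) k) x * T x (js[j:=k]))
   - (\<Sum>j<length js. \<Sum>k\<in>UNIV. Gamma g x q (js!j) k * pd p (\<lambda>y. T y (js[j:=k])) x)
   - (\<Sum>k\<in>UNIV. Gamma g x p q k * nabla g T x (k # js))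
   - (\<Sum>j<length js. \<Sum>k\<in>UNIV. Gamma g x p (js!j) k * pd q (\<lambda>y. T y (js[j:=k])) x)
   + (\<Sum>j<length js. \<Sum>k\<in>UNIV. Gamma g x p (js!j) k *
        (\<Sum>i<length js. \<Sum>l\<in>UNIV. Gamma g x q ((js[j:=k])!i) l * T x ((js[j:=k])[i:=l])))"
proof -
  define n where "n = length js"
  have e1: "nabla g (nabla g T) x (p # q # js) = pd p (\<lambda>y. nabla g T y (q # js)) x
      - (\<Sum>j<Suc n. \<Sum>k\<in>UNIV. Gamma g x p ((q#js)!j) k * nabla g T x ((q#js)[j:=k]))"
    by (simp add: nabla_Cons n_def)
  have e2: "(\<Sum>j<Suc n. \<Sum>k\<in>UNIV. Gamma g x p ((q#js)!j) k * nabla g T x ((q#js)[j:=k]))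
     = (\<Sum>k\<in>UNIV. Gamma g x p q k * nabla g T x (k # js))
     + (\<Sum>j<n. \<Sum>k\<in>UNIV. Gamma g x p (js!j) k * nabla g T x (q # js[j:=k]))"
    unfolding sum_Suc_shift by simp
  have e3: "(\<Sum>j<n. \<Sum>k\<in>UNIV. Gamma g x p (js!j) k * nabla g T x (q # js[j:=k]))
     = (\<Sum>j<n. \<Sum>k\<in>UNIV. Gamma g x p (js!j) k * pd q (\<lambda>y. T y (js[j:=k])) x)
     - (\<Sum>j<n. \<Sum>k\<in>UNIV. Gamma g x p (js!j) k *
        (\<Sum>i<n. \<Sum>l\<in>UNIV. Gamma g x q ((js[j:=k])!i) l * T x ((js[j:=k])[i:=l])))"
    by (simp add: nabla_Cons n_def right_diff_distrib sum_subtractf)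
  have ext1: "(\<lambda>y. nabla g T y (q # js)) = (\<lambda>y. pd q (\<lambda>y. T y js) y
      - (\<Sum>j<n. \<Sum>k\<in>UNIV. Gamma g y q (js!j) k * T y (js[j:=k])))"
    by (simp add: nabla_Cons n_def)
  have sm1: "smooth_on U (\<lambda>y. Gamma g y q (js!j) k * T y (js[j:=k]))" for j k
    by (intro smooth_mult Gamma_smooth Tsm U_open)
  have sm2: "smooth_on U (\<lambda>y. \<Sum>k\<in>UNIV. Gamma g y q (js!j) k * T y (js[j:=k]))" for j
    by (intro smooth_sum sm1 U_open) auto
  have sm3: "smooth_on U (\<lambda>y. \<Sum>j<n. \<Sum>k\<in>UNIV. Gamma g y q (js!j) k * T y (js[j:=k]))"
    by (intro smooth_sum sm2 U_open) auto
  have e4: "pd p (\<lambda>y. nabla g T y (q # js)) x = pd p (pd q (\<lambda>y. T y js)) x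
      - (\<Sum>j<n. \<Sum>k\<in>UNIV. pd p (\<lambda>y. Gamma g y q (js!j) k * T y (js[j:=k])) x)"
  proof -
    have "pd p (\<lambda>y. nabla g T y (q # js)) x = pd p (\<lambda>y. pd q (\<lambda>y. T y js) y) x
      - pd p (\<lambda>y. \<Sum>j<n. \<Sum>k\<in>UNIV. Gamma g y q (js!j) k * T y (js[j:=k])) x"
      unfolding ext1 by (rule pd_diff) (auto intro!: diffble[OF _ x] smooth_pd Tsm sm3)
    also have "pd p (\<lambda>y. \<Sum>j<n. \<Sum>k\<in>UNIV. Gamma g y q (js!j) k * T y (js[j:=k])) x
       = (\<Sum>j<n. pd p (\<lambda>y. \<Sum>k\<in>UNIV. Gamma g y q (js!j) k * T y (js[j:=k])) x)"
      by (rule pd_sum) (auto intro!: diffble[OF _ x] sm2)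
    also have "\<dots> = (\<Sum>j<n. \<Sum>k\<in>UNIV. pd p (\<lambda>y. Gamma g y q (js!j) k * T y (js[j:=k])) x)"
      by (rule sum.cong[OF refl], rule pd_sum) (auto intro!: diffble[OF _ x] sm1)
    finally show ?thesis by simp
  qed
  have e5: "pd p (\<lambda>y. Gamma g y q (js!j) k * T y (js[j:=k])) x =
      pd p (\<lambda>y. Gamma g y q (js!j) k) x * T x (js[j:=k]) + Gamma g x q (js!j) k * pd p (\<lambda>y. T y (js[j:=k])) x" for j k
    by (rule pd_mult) (auto intro!: diffble[OF _ x] Gamma_smooth Tsm)
  show ?thesis
    unfolding e1 e2 e3 e4 e5 sum.distrib n_def[symmetric] by simp
qed


lemma ricci:
  assumes x: "x \<in> U" and Tsm: "\<And>js. smooth_on U (\<lambda>y. T y js)"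
  shows "nabla g (nabla g T) x (a # b # js) - nabla g (nabla g T) x (b # a # js) =
     - (\<Sum>j<length js. \<Sum>l\<in>UNIV. Rup g x a b (js!j) l * T x (js[j:=l]))"
proof -
  define n where "n = length js"
  define A2 where "A2 p q = (\<Sum>j<n. \<Sum>k\<in>UNIV. pd p (\<lambda>y. Gamma g y q (js!j) k) x * T x (js[j:=k]))" for p q
  define C where "C p q = (\<Sum>j<n. \<Sum>k\<in>UNIV. Gamma g x p (js!j) k *
        (\<Sum>i<n. \<Sum>l\<in>UNIV. Gamma g x q ((js[j:=k])!i) l * T x ((js[j:=k])[i:=l])))" for p q
  define E where "E p q = (\<Sum>j<n. \<Sum>k\<in>UNIV. Gamma g x p (js!j) k *
        (\<Sum>l\<in>UNIV. Gamma g x q k l * T x (js[j:=l])))" for p q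
  define H where "H p q j i k l = (if i = j then 0 else
        Gamma g x p (js!j) k * (Gamma g x q (js!i) l * T x ((js[j:=k])[i:=l])))" for p q j i k l
  define X where "X p q = (\<Sum>j<n. \<Sum>i<n. \<Sum>k\<in>UNIV. \<Sum>l\<in>UNIV. H p q j i k l)" for p q
  have A1: "pd a (pd b (\<lambda>y. T y js)) x = pd b (pd a (\<lambda>y. T y js)) x"
    by (rule schwarz[OF U_open x Tsm])
  have A4: "(\<Sum>k\<in>UNIV. Gamma g x a b k * nabla g T x (k # js)) = (\<Sum>k\<in>UNIV. Gamma g x b a k * nabla g T x (k # js))"
    using Gamma_sym[OF x] by simp
  have CEX: "C p q = E p q + X p q" for p q
  proof -
    have inner: "(\<Sum>i<n. \<Sum>l\<in>UNIV. Gamma g x q ((js[j:=k])!i) l * T x ((js[j:=k])[i:=l]))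
        = (\<Sum>l\<in>UNIV. Gamma g x q k l * T x (js[j:=l]))
        + (\<Sum>i<n. \<Sum>l\<in>UNIV. if i = j then 0 else Gamma g x q (js!i) l * T x ((js[j:=k])[i:=l]))"
      if j: "j < n" for j k
      apply (subst sum_split_one[of "{..<n}" j])
      using j by (auto simp: n_def intro!: sum.cong)
    have "C p q = (\<Sum>j<n. \<Sum>k\<in>UNIV. Gamma g x p (js!j) k * (\<Sum>l\<in>UNIV. Gamma g x q k l * T x (js[j:=l]))
        + Gamma g x p (js!j) k * (\<Sum>i<n. \<Sum>l\<in>UNIV. if i = j then 0 else Gamma g x q (js!i) l * T x ((js[j:=k])[i:=l])))"
      unfolding C_def by (intro sum.cong refl) (simp add: inner distrib_left)
    also have "\<dots> = E p q + (\<Sum>j<n. \<Sum>k\<in>UNIV. Gamma g x p (js!j) k * (\<Sum>i<n. \<Sum>l\<in>UNIV. if i = j then 0 else Gamma g x q (js!i) l * T x ((js[j:=k])[i:=l])))"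
      unfolding E_def by (simp add: sum.distrib)
    also have "(\<Sum>j<n. \<Sum>k\<in>UNIV. Gamma g x p (js!j) k * (\<Sum>i<n. \<Sum>l\<in>UNIV. if i = j then 0 else Gamma g x q (js!i) l * T x ((js[j:=k])[i:=l])))
        = (\<Sum>j<n. \<Sum>k\<in>UNIV. \<Sum>i<n. \<Sum>l\<in>UNIV. H p q j i k l)"
      unfolding H_def by (intro sum.cong refl) (auto simp: sum_distrib_left intro!: sum.cong)
    also have "\<dots> = X p q"
      unfolding X_def by (rule sum.cong[OF refl], rule sum.swap)
    finally show ?thesis .
  qed
  have Hs: "H q p i j l k = H p q j i k l" for p q i j k l
  proof (cases "i = j")
    case True then show ?thesis unfolding H_def by simp
  next
    case False
    then have "(js[i:=l])[j:=k] = (js[j:=k])[i:=l]" by (rule list_update_swap)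
    then show ?thesis unfolding H_def using False by (simp add: mult_ac)
  qed
  have Xs: "X a b = X b a"
  proof -
    have "X b a = (\<Sum>i<n. \<Sum>j<n. \<Sum>l\<in>UNIV. \<Sum>k\<in>UNIV. H b a i j l k)" unfolding X_def by simp
    also have "\<dots> = (\<Sum>j<n. \<Sum>i<n. \<Sum>k\<in>UNIV. \<Sum>l\<in>UNIV. H b a i j l k)"
      by (subst sum.swap) (rule sum.cong[OF refl], rule sum.cong[OF refl], rule sum.swap)
    also have "\<dots> = X a b" unfolding X_def by (intro sum.cong refl Hs)
    finally show ?thesis by simp
  qed
  have Ef: "E p q = (\<Sum>j<n. \<Sum>l\<in>UNIV. (\<Sum>k\<in>UNIV. Gamma g x p (js!j) k * Gamma g x q k l) * T x (js[j:=l]))" for p q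
  proof -
    have "E p q = (\<Sum>j<n. \<Sum>k\<in>UNIV. \<Sum>l\<in>UNIV. Gamma g x p (js!j) k * Gamma g x q k l * T x (js[j:=l]))"
      unfolding E_def by (intro sum.cong refl) (simp add: sum_distrib_left mult.assoc)
    also have "\<dots> = (\<Sum>j<n. \<Sum>l\<in>UNIV. \<Sum>k\<in>UNIV. Gamma g x p (js!j) k * Gamma g x q k l * T x (js[j:=l]))"
      by (rule sum.cong[OF refl], rule sum.swap)
    also have "\<dots> = (\<Sum>j<n. \<Sum>l\<in>UNIV. (\<Sum>k\<in>UNIV. Gamma g x p (js!j) k * Gamma g x q k l) * T x (js[j:=l]))"
      by (simp add: sum_distrib_right)
    finally show ?thesis .
  qed
  have R: "- (\<Sum>j<n. \<Sum>l\<in>UNIV. Rup g x a b (js!j) l * T x (js[j:=l])) = - A2 a b + A2 b a + E a b - E b a"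
  proof -
    have "(\<Sum>j<n. \<Sum>l\<in>UNIV. Rup g x a b (js!j) l * T x (js[j:=l])) =
      (\<Sum>j<n. \<Sum>l\<in>UNIV. pd a (\<lambda>y. Gamma g y b (js!j) l) x * T x (js[j:=l])
         - pd b (\<lambda>y. Gamma g y a (js!j) l) x * T x (js[j:=l])
         - (\<Sum>k\<in>UNIV. Gamma g x a (js!j) k * Gamma g x b k l) * T x (js[j:=l])
         + (\<Sum>k\<in>UNIV. Gamma g x b (js!j) k * Gamma g x a k l) * T x (js[j:=l]))"
      unfolding Rup_def by (intro sum.cong refl) (simp add: algebra_simps)
    also have "\<dots> = A2 a b - A2 b a - E a b + E b a"
      unfolding A2_def Ef by (simp add: sum.distrib sum_subtractf mult.commute)
    finally show ?thesis by simp
  qed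
  show ?thesis
    unfolding ricci_D[OF x Tsm] n_def[symmetric] A2_def[symmetric] C_def[symmetric] R A4 A1
    using CEX[of a b] CEX[of b a] Xs by simp
qed

end


locale alg =
  fixes R P :: "'n::finite \<Rightarrow> 'n \<Rightarrow> 'n \<Rightarrow> 'n \<Rightarrow> real" and G GI Rc :: "'n \<Rightarrow> 'n \<Rightarrow> real" and L :: real
  assumes Gsym: "G i j = G j i" and GIsym: "GI i j = GI j i"
   and GGI: "(\<Sum>k\<in>UNIV. GI i k * G k j) = (if i = j then 1 else 0)"
   and PR: "P a b c d = (\<Sum>e\<in>UNIV. R a b c e * GI e d)"
   and Ra1: "R a b c d = - R b a c d" and Ra2: "R a b c d = - R a b d c"
   and Rb: "R a b c d + R b c a d + R c a b d = 0"
   and Rcdef: "Rc a c = (\<Sum>b\<in>UNIV. P a b c b)"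
   and hyp: "- ((\<Sum>l\<in>UNIV. P a b c l * R l d e f) + (\<Sum>l\<in>UNIV. P a b d l * R c l e f)
       + (\<Sum>l\<in>UNIV. P a b e l * R c d l f) + (\<Sum>l\<in>UNIV. P a b f l * R c d e l))
     = L * (- G c b * R a d e f + G c a * R b d e f - G d b * R c a e f + G d a * R c b e f
            - G e b * R c d a f + G e a * R c d b f - G f b * R c d e a + G f a * R c d e b)"
begin

lemma Rsym: "R a b c d = R c d a b"
  using Ra2[of a b c d] Rb[of a b c d] Rb[of a b d c] Ra1[of a c b d] Ra2[of a c b d] Rb[of a c d b] Ra1[of a d b c] Ra2[of a d b c] Ra1[of a d c b] Ra2[of b c a d] Rb[of b c d a] Ra2[of b d a c] Ra1[of b d c a] Ra2[of c d a b]
  by linarith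

lemma Rc_expr: "Rc a c = (\<Sum>b\<in>UNIV. \<Sum>e\<in>UNIV. R a b c e * GI e b)"
  by (simp add: Rcdef PR)

lemma Rcsym: "Rc a c = Rc c a"
proof -
  have "Rc a c = (\<Sum>b\<in>UNIV. \<Sum>e\<in>UNIV. R c e a b * GI b e)"
    unfolding Rc_expr
  proof (intro sum.cong refl)
    fix b e show "R a b c e * GI e b = R c e a b * GI b e" using Rsym[of a b c e] GIsym[of e b] by simp
  qed
  also have "\<dots> = (\<Sum>e\<in>UNIV. \<Sum>b\<in>UNIV. R c e a b * GI b e)" by (rule sum.swap)
  also have "\<dots> = Rc c a" unfolding Rc_expr by simp
  finally show ?thesis .
qed

lemma Pant: "P a b c d = - P b a c d"
  unfolding PR by (subst Ra1) (simp add: sum_negf)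

lemma Pb: "P a b c d + P b c a d + P c a b d = 0"
proof -
  have "P a b c d + P b c a d + P c a b d = (\<Sum>e\<in>UNIV. (R a b c e + R b c a e + R c a b e) * GI e d)"
    unfolding PR by (simp add: sum.distrib distrib_right)
  also have "\<dots> = 0" by (simp add: Rb)
  finally show ?thesis .
qed

lemma K: "(\<Sum>c\<in>UNIV. \<Sum>f\<in>UNIV. GI c f * R c p q f) = - Rc p q"
proof -
  have "(\<Sum>c\<in>UNIV. \<Sum>f\<in>UNIV. GI c f * R c p q f) = (\<Sum>c\<in>UNIV. \<Sum>f\<in>UNIV. - (R p c q f * GI f c))"
  proof (intro sum.cong refl)
    fix c f
    show "GI c f * R c p q f = - (R p c q f * GI f c)"
      using Ra1[of c p q f] GIsym[of c f] by simp
  qed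
  also have "\<dots> = - Rc p q" unfolding Rc_expr by (simp add: sum_negf)
  finally show ?thesis .
qed


lemma c_gen: "(\<Sum>c\<in>UNIV. \<Sum>f\<in>UNIV. GI c f * (\<Sum>l\<in>UNIV. X l * Y c f l))
   = (\<Sum>l\<in>UNIV. X l * (\<Sum>c\<in>UNIV. \<Sum>f\<in>UNIV. GI c f * Y c f l))"
proof -
  have "(\<Sum>c\<in>UNIV. \<Sum>f\<in>UNIV. GI c f * (\<Sum>l\<in>UNIV. X l * Y c f l))
     = (\<Sum>c\<in>UNIV. \<Sum>f\<in>UNIV. \<Sum>l\<in>UNIV. X l * (GI c f * Y c f l))"
    by (simp add: sum_distrib_left mult_ac)
  also have "\<dots> = (\<Sum>c\<in>UNIV. \<Sum>l\<in>UNIV. \<Sum>f\<in>UNIV. X l * (GI c f * Y c f l))"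
    by (rule sum.cong[OF refl], rule sum.swap)
  also have "\<dots> = (\<Sum>l\<in>UNIV. \<Sum>c\<in>UNIV. \<Sum>f\<in>UNIV. X l * (GI c f * Y c f l))"
    by (rule sum.swap)
  also have "\<dots> = (\<Sum>l\<in>UNIV. X l * (\<Sum>c\<in>UNIV. \<Sum>f\<in>UNIV. GI c f * Y c f l))"
    by (simp add: sum_distrib_left)
  finally show ?thesis .
qed

lemma C2: "(\<Sum>c\<in>UNIV. \<Sum>f\<in>UNIV. GI c f * (\<Sum>l\<in>UNIV. P a b d l * R c l e f)) = - (\<Sum>l\<in>UNIV. P a b d l * Rc l e)"
  by (simp add: c_gen[of "\<lambda>l. P a b d l" "\<lambda>c f l. R c l e f"] K sum_negf)

lemma C3: "(\<Sum>c\<in>UNIV. \<Sum>f\<in>UNIV. GI c f * (\<Sum>l\<in>UNIV. P a b e l * R c d l f)) = - (\<Sum>l\<in>UNIV. P a b e l * Rc d l)"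
  by (simp add: c_gen[of "\<lambda>l. P a b e l" "\<lambda>c f l. R c d l f"] K sum_negf)

definition W where "W a b f m = (\<Sum>c\<in>UNIV. GI c f * P a b c m)"

lemma W_anti: "W a b m f = - W a b f m"
proof -
  have "W a b f m = (\<Sum>c\<in>UNIV. \<Sum>n\<in>UNIV. GI c f * GI n m * R a b c n)"
    unfolding W_def PR by (simp add: sum_distrib_left mult_ac)
  have "W a b m f = (\<Sum>c\<in>UNIV. \<Sum>n\<in>UNIV. GI c m * GI n f * R a b c n)"
    unfolding W_def PR by (simp add: sum_distrib_left mult_ac)
  also have "\<dots> = (\<Sum>n\<in>UNIV. \<Sum>c\<in>UNIV. GI c m * GI n f * R a b c n)" by (rule sum.swap)
  also have "\<dots> = (\<Sum>n\<in>UNIV. \<Sum>c\<in>UNIV. - (GI n f * GI c m * R a b n c))"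
  proof (intro sum.cong refl)
    fix n c show "GI c m * GI n f * R a b c n = - (GI n f * GI c m * R a b n c)"
      using Ra2[of a b c n] by simp
  qed
  also have "\<dots> = - W a b f m" using \<open>W a b f m = _\<close> by (simp add: sum_negf)
  finally show ?thesis .
qed

lemma C14: "(\<Sum>c\<in>UNIV. \<Sum>f\<in>UNIV. GI c f * (\<Sum>l\<in>UNIV. P a b c l * R l d e f))
   + (\<Sum>c\<in>UNIV. \<Sum>f\<in>UNIV. GI c f * (\<Sum>l\<in>UNIV. P a b f l * R c d e l)) = 0"
proof -
  have 1: "(\<Sum>c\<in>UNIV. \<Sum>f\<in>UNIV. GI c f * (\<Sum>l\<in>UNIV. P a b c l * R l d e f))
     = (\<Sum>f\<in>UNIV. \<Sum>m\<in>UNIV. W a b f m * R m d e f)"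
  proof -
    have "(\<Sum>c\<in>UNIV. \<Sum>f\<in>UNIV. GI c f * (\<Sum>l\<in>UNIV. P a b c l * R l d e f))
        = (\<Sum>c\<in>UNIV. \<Sum>f\<in>UNIV. \<Sum>m\<in>UNIV. GI c f * P a b c m * R m d e f)"
      by (simp add: sum_distrib_left mult_ac)
    also have "\<dots> = (\<Sum>f\<in>UNIV. \<Sum>c\<in>UNIV. \<Sum>m\<in>UNIV. GI c f * P a b c m * R m d e f)"
      by (rule sum.swap)
    also have "\<dots> = (\<Sum>f\<in>UNIV. \<Sum>m\<in>UNIV. \<Sum>c\<in>UNIV. GI c f * P a b c m * R m d e f)"
      by (rule sum.cong[OF refl], rule sum.swap)
    also have "\<dots> = (\<Sum>f\<in>UNIV. \<Sum>m\<in>UNIV. W a b f m * R m d e f)"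
      unfolding W_def by (simp add: sum_distrib_right)
    finally show ?thesis .
  qed
  have 2: "(\<Sum>c\<in>UNIV. \<Sum>f\<in>UNIV. GI c f * (\<Sum>l\<in>UNIV. P a b f l * R c d e l))
     = (\<Sum>c\<in>UNIV. \<Sum>m\<in>UNIV. W a b c m * R c d e m)"
  proof -
    have "(\<Sum>c\<in>UNIV. \<Sum>f\<in>UNIV. GI c f * (\<Sum>l\<in>UNIV. P a b f l * R c d e l))
        = (\<Sum>c\<in>UNIV. \<Sum>f\<in>UNIV. \<Sum>m\<in>UNIV. GI f c * P a b f m * R c d e m)"
    proof (intro sum.cong refl)
      fix c f show "GI c f * (\<Sum>l\<in>UNIV. P a b f l * R c d e l) = (\<Sum>m\<in>UNIV. GI f c * P a b f m * R c d e m)"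
        using GIsym[of c f] by (simp add: sum_distrib_left mult_ac)
    qed
    also have "\<dots> = (\<Sum>c\<in>UNIV. \<Sum>m\<in>UNIV. \<Sum>f\<in>UNIV. GI f c * P a b f m * R c d e m)"
      by (rule sum.cong[OF refl], rule sum.swap)
    also have "\<dots> = (\<Sum>c\<in>UNIV. \<Sum>m\<in>UNIV. W a b c m * R c d e m)"
      unfolding W_def by (simp add: sum_distrib_right)
    finally show ?thesis .
  qed
  have 3: "(\<Sum>m\<in>UNIV. \<Sum>f\<in>UNIV. W a b m f * R m d e f) = (\<Sum>m\<in>UNIV. \<Sum>f\<in>UNIV. - (W a b f m * R m d e f))"
  proof (intro sum.cong refl)
    fix m f show "W a b m f * R m d e f = - (W a b f m * R m d e f)" using W_anti[of a b m f] by simp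
  qed
  also have "\<dots> = - (\<Sum>f\<in>UNIV. \<Sum>m\<in>UNIV. W a b f m * R m d e f)"
    by (subst sum.swap) (simp add: sum_negf)
  finally show ?thesis unfolding 1 2 by simp
qed

lemma dG1: "(\<Sum>c\<in>UNIV. \<Sum>f\<in>UNIV. GI c f * (G c b * Z f)) = Z b"
proof -
  have "(\<Sum>c\<in>UNIV. \<Sum>f\<in>UNIV. GI c f * (G c b * Z f)) = (\<Sum>f\<in>UNIV. (\<Sum>c\<in>UNIV. GI f c * G c b) * Z f)"
  proof (subst sum.swap, rule sum.cong[OF refl])
    fix f show "(\<Sum>c\<in>UNIV. GI c f * (G c b * Z f)) = (\<Sum>c\<in>UNIV. GI f c * G c b) * Z f"
      by (simp add: sum_distrib_right sum_distrib_left GIsym[of _ f] mult_ac)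
  qed
  also have "\<dots> = Z b" by (simp add: GGI)
  finally show ?thesis .
qed

lemma dG2: "(\<Sum>c\<in>UNIV. \<Sum>f\<in>UNIV. GI c f * (G f b * Z c)) = Z b"
proof -
  have "(\<Sum>c\<in>UNIV. \<Sum>f\<in>UNIV. GI c f * (G f b * Z c)) = (\<Sum>c\<in>UNIV. (\<Sum>f\<in>UNIV. GI c f * G f b) * Z c)"
    by (rule sum.cong[OF refl]) (simp add: sum_distrib_right sum_distrib_left mult_ac)
  also have "\<dots> = Z b" by (simp add: GGI)
  finally show ?thesis .
qed

lemma dK: "(\<Sum>c\<in>UNIV. \<Sum>f\<in>UNIV. GI c f * (s * R c p q f)) = - s * Rc p q"
proof -
  have "(\<Sum>c\<in>UNIV. \<Sum>f\<in>UNIV. GI c f * (s * R c p q f)) = s * (\<Sum>c\<in>UNIV. \<Sum>f\<in>UNIV. GI c f * R c p q f)"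
    by (simp add: sum_distrib_left mult_ac)
  then show ?thesis by (simp add: K)
qed


lemma lin4: "(\<Sum>c\<in>UNIV. \<Sum>f\<in>UNIV. GI c f * (- (A c f + B c f + C c f + D c f))) =
   - ((\<Sum>c\<in>UNIV. \<Sum>f\<in>UNIV. GI c f * A c f) + (\<Sum>c\<in>UNIV. \<Sum>f\<in>UNIV. GI c f * B c f)
    + (\<Sum>c\<in>UNIV. \<Sum>f\<in>UNIV. GI c f * C c f) + (\<Sum>c\<in>UNIV. \<Sum>f\<in>UNIV. GI c f * D c f))"
  by (simp add: distrib_left right_diff_distrib sum.distrib sum_subtractf sum_negf)

lemma linL: "(\<Sum>c\<in>UNIV. \<Sum>f\<in>UNIV. GI c f * (L * X c f)) = L * (\<Sum>c\<in>UNIV. \<Sum>f\<in>UNIV. GI c f * X c f)"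
  by (simp add: sum_distrib_left mult_ac)

lemma lin8: "(\<Sum>c\<in>UNIV. \<Sum>f\<in>UNIV. GI c f * (- A c f + B c f - C c f + D c f - E c f + F c f - H c f + J c f)) =
   - (\<Sum>c\<in>UNIV. \<Sum>f\<in>UNIV. GI c f * A c f) + (\<Sum>c\<in>UNIV. \<Sum>f\<in>UNIV. GI c f * B c f)
   - (\<Sum>c\<in>UNIV. \<Sum>f\<in>UNIV. GI c f * C c f) + (\<Sum>c\<in>UNIV. \<Sum>f\<in>UNIV. GI c f * D c f)
   - (\<Sum>c\<in>UNIV. \<Sum>f\<in>UNIV. GI c f * E c f) + (\<Sum>c\<in>UNIV. \<Sum>f\<in>UNIV. GI c f * F c f)
   - (\<Sum>c\<in>UNIV. \<Sum>f\<in>UNIV. GI c f * H c f) + (\<Sum>c\<in>UNIV. \<Sum>f\<in>UNIV. GI c f * J c f)"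
  by (simp add: distrib_left right_diff_distrib sum.distrib sum_subtractf sum_negf)

lemma C4: "(\<Sum>c\<in>UNIV. \<Sum>f\<in>UNIV. GI c f * (\<Sum>l\<in>UNIV. P a b f l * R c d e l))
   = - (\<Sum>c\<in>UNIV. \<Sum>f\<in>UNIV. GI c f * (\<Sum>l\<in>UNIV. P a b c l * R l d e f))"
  using C14[of a b d e] by simp

lemma star: "(\<Sum>m\<in>UNIV. P a b d m * Rc m e) + (\<Sum>m\<in>UNIV. P a b e m * Rc d m)
   = L * (G d b * Rc a e - G d a * Rc b e + G e b * Rc d a - G e a * Rc d b)"
proof -
  have eq: "(\<Sum>c\<in>UNIV. \<Sum>f\<in>UNIV. GI c f * (- ((\<Sum>l\<in>UNIV. P a b c l * R l d e f) + (\<Sum>l\<in>UNIV. P a b d l * R c l e f)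
       + (\<Sum>l\<in>UNIV. P a b e l * R c d l f) + (\<Sum>l\<in>UNIV. P a b f l * R c d e l))))
     = (\<Sum>c\<in>UNIV. \<Sum>f\<in>UNIV. GI c f * (L * (- G c b * R a d e f + G c a * R b d e f - G d b * R c a e f + G d a * R c b e f
            - G e b * R c d a f + G e a * R c d b f - G f b * R c d e a + G f a * R c d e b)))"
    by (intro sum.cong refl) (simp only: hyp)
  have l: "(\<Sum>c\<in>UNIV. \<Sum>f\<in>UNIV. GI c f * (- ((\<Sum>l\<in>UNIV. P a b c l * R l d e f) + (\<Sum>l\<in>UNIV. P a b d l * R c l e f)
       + (\<Sum>l\<in>UNIV. P a b e l * R c d l f) + (\<Sum>l\<in>UNIV. P a b f l * R c d e l))))
     = (\<Sum>m\<in>UNIV. P a b d m * Rc m e) + (\<Sum>m\<in>UNIV. P a b e m * Rc d m)"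
    unfolding lin4 C2 C3 C4 by simp
  have mG: "- G c b * R a d e f = - (G c b * R a d e f)" for c f by simp
  have r: "(\<Sum>c\<in>UNIV. \<Sum>f\<in>UNIV. GI c f * (L * (- G c b * R a d e f + G c a * R b d e f - G d b * R c a e f + G d a * R c b e f
            - G e b * R c d a f + G e a * R c d b f - G f b * R c d e a + G f a * R c d e b)))
     = L * (G d b * Rc a e - G d a * Rc b e + G e b * Rc d a - G e a * Rc d b)"
    unfolding linL mG lin8 dG1 dG2 dK by simp
  show ?thesis using eq l r by simp
qed


definition W4 where "W4 p x y z = (\<Sum>m\<in>UNIV. Rc p m * P x y z m)"
definition Sx where "Sx a b d e = G d b * Rc a e - G d a * Rc b e + G e b * Rc d a - G e a * Rc d b"

lemma star4: "W4 e a b d + W4 d a b e = L * Sx a b d e"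
proof -
  have 1: "(\<Sum>m\<in>UNIV. P a b d m * Rc m e) = W4 e a b d"
    unfolding W4_def by (intro sum.cong refl) (simp add: Rcsym[of _ e])
  have 2: "(\<Sum>m\<in>UNIV. P a b e m * Rc d m) = W4 d a b e"
    unfolding W4_def by (intro sum.cong refl) simp
  show ?thesis using star[of a b d e] unfolding 1 2 Sx_def by simp
qed

lemma W4anti: "W4 p x y z = - W4 p y x z"
  unfolding W4_def by (subst Pant) (simp add: sum_negf)

lemma W4bian: "W4 p x y z + W4 p y z x + W4 p z x y = 0"
proof -
  have "W4 p x y z + W4 p y z x + W4 p z x y = (\<Sum>m\<in>UNIV. Rc p m * (P x y z m + P y z x m + P z x y m))"
    unfolding W4_def by (simp add: sum.distrib distrib_left)
  also have "\<dots> = 0" by (simp add: Pb)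
  finally show ?thesis .
qed

lemma goal1: "W4 a b c e + W4 b c a e + W4 c a b e = 0"
proof -
  have s: "Sx b c e a + Sx c a e b + Sx a b e c = 0"
    unfolding Sx_def using Rcsym[of b a] Rcsym[of c a] Rcsym[of c b] Gsym[of a c] Gsym[of a b] Gsym[of b c]
    by simp
  have "L * Sx b c e a + L * Sx c a e b + L * Sx a b e c = 0"
    using s by (simp add: distrib_left[symmetric])
  then show ?thesis
    using star4[of a b c e] star4[of b c a e] star4[of c a b e] W4bian[of e b c a] by linarith
qed

lemma goal2: "W4 a b e c - W4 b a c e + W4 c e b a - W4 e c a b = 0"
proof -
  have s: "Sx a b c e - Sx a e b c + Sx b c a e + Sx c e a b = 0"
    unfolding Sx_def using Rcsym[of b a] Rcsym[of c a] Rcsym[of c b] Rcsym[of e a] Rcsym[of e b] Rcsym[of e c]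
      Gsym[of a c] Gsym[of a b] Gsym[of b c] Gsym[of a e] Gsym[of b e] Gsym[of c e]
    by simp
  have "L * Sx a b c e - L * Sx a e b c + L * Sx b c a e + L * Sx c e a b = 0"
    using s by (simp add: right_diff_distrib[symmetric] distrib_left[symmetric])
  then show ?thesis
    using W4bian[of a b c e] W4anti[of a b e c] W4bian[of b a c e] W4anti[of b a e c] W4anti[of c a b e]
      W4bian[of c a e b] W4bian[of e a b c] star4[where a=a and b=b and d=c and e=e] star4[where a=a and b=e and d=b and e=c] star4[where a=b and b=c and d=a and e=e] star4[where a=c and b=e and d=a and e=b]
    by linarith
qed

end


lemma sum2: "(\<Sum>j<(2::nat). F j) = F 0 + F (Suc 0)"
  by (simp add: numeral_2_eq_2)

lemma sum3: "(\<Sum>j<(3::nat). F j) = F 0 + F (Suc 0) + F (Suc (Suc 0))"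
  by (simp add: numeral_3_eq_3)

lemma sum4: "(\<Sum>j<(4::nat). F j) = F 0 + F (Suc 0) + F (Suc (Suc 0)) + F (Suc (Suc (Suc 0)))"
proof -
  have "(4::nat) = Suc (Suc (Suc (Suc 0)))" by simp
  then show ?thesis by (simp only:) (simp add: add_ac)
qed

context rmetric begin

lemma Rup_anti: "Rup g x a b c d = - Rup g x b a c d"
  unfolding Rup_def by (simp add: mult.commute)

lemma pdG: "x \<in> U \<Longrightarrow> pd p (\<lambda>y. Gamma g y q r d) x = pd p (\<lambda>y. Gamma g y r q d) x"
  by (rule pd_local[OF U_open]) (auto intro: Gamma_sym)

lemma Rup_bianchi: assumes x: "x \<in> U"
  shows "Rup g x a b c d + Rup g x b c a d + Rup g x c a b d = 0"
proof -
  have e1: "(\<Sum>k\<in>UNIV. Gamma g x b k d * Gamma g x c a k) = (\<Sum>k\<in>UNIV. Gamma g x a c k * Gamma g x b k d)"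
    using Gamma_sym[OF x, of c a] by (simp add: mult.commute)
  have e2: "(\<Sum>k\<in>UNIV. Gamma g x c b k * Gamma g x a k d) = (\<Sum>k\<in>UNIV. Gamma g x a k d * Gamma g x b c k)"
    using Gamma_sym[OF x, of c b] by (simp add: mult.commute)
  have e3: "(\<Sum>k\<in>UNIV. Gamma g x c k d * Gamma g x a b k) = (\<Sum>k\<in>UNIV. Gamma g x b a k * Gamma g x c k d)"
    using Gamma_sym[OF x, of a b] by (simp add: mult.commute)
  show ?thesis unfolding Rup_def
    using e1 e2 e3 pdG[OF x, of a c b d] pdG[OF x, of b c a d] pdG[OF x, of c b a d] by simp
qed

lemma Rlow_anti1: "Rlow g x a b c d = - Rlow g x b a c d"
  unfolding Rlow_def by (subst Rup_anti) (simp add: sum_negf)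

lemma Rlow_bianchi: assumes x: "x \<in> U"
  shows "Rlow g x a b c d + Rlow g x b c a d + Rlow g x c a b d = 0"
proof -
  have "Rlow g x a b c d + Rlow g x b c a d + Rlow g x c a b d =
     (\<Sum>e\<in>UNIV. (Rup g x a b c e + Rup g x b c a e + Rup g x c a b e) * g x e d)"
    unfolding Rlow_def by (simp add: sum.distrib distrib_right)
  also have "\<dots> = 0" by (simp add: Rup_bianchi[OF x])
  finally show ?thesis .
qed

lemma Rup_Rlow: assumes x: "x \<in> U"
  shows "Rup g x a b c d = (\<Sum>e\<in>UNIV. Rlow g x a b c e * ginv g x e d)"
proof -
  have "(\<Sum>e\<in>UNIV. Rlow g x a b c e * ginv g x e d) = (\<Sum>e\<in>UNIV. \<Sum>f\<in>UNIV. Rup g x a b c f * (g x f e * ginv g x e d))"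
    unfolding Rlow_def sum_distrib_right by (simp add: mult.assoc)
  also have "\<dots> = (\<Sum>f\<in>UNIV. Rup g x a b c f * (\<Sum>e\<in>UNIV. g x f e * ginv g x e d))"
    by (subst sum.swap) (simp add: sum_distrib_left)
  also have "\<dots> = Rup g x a b c d" by (simp add: g_ginv[OF x])
  finally show ?thesis by simp
qed

definition gT :: "real^'n \<Rightarrow> 'n list \<Rightarrow> real" where "gT y js = g y (js!0) (js!1)"

lemma gT_smooth: "smooth_on U (\<lambda>y. gT y js)"
  unfolding gT_def by (rule g_smooth)

lemma N_gT: assumes y: "y \<in> U" and l: "length js = 2"
  shows "nabla g gT y (p # js) = 0"
proof -
  obtain c d where js: "js = [c, d]"
    using l by (cases js; cases "tl js"; auto)
  show ?thesis unfolding js nabla_Cons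
    by (simp add: sum2 gT_def metric_compat[OF y])
qed

lemma NN_gT: assumes x: "x \<in> U"
  shows "nabla g (nabla g gT) x (a # b # [c, d]) = 0"
proof -
  have z: "nabla g gT x xs = 0" if "length xs = 3" for xs
  proof -
    have "xs = hd xs # tl xs" "length (tl xs) = 2" using that by (cases xs, auto)+
    then show ?thesis using N_gT[OF x, of "tl xs" "hd xs"] by metis
  qed
  have "pd a (\<lambda>y. nabla g gT y [b, c, d]) x = pd a (\<lambda>y. 0) x"
    by (rule pd_local[OF U_open x]) (simp add: N_gT)
  then show ?thesis unfolding nabla_Cons[where T="nabla g gT"] by (simp add: pd_const z)
qed

lemma Rlow_anti2: assumes x: "x \<in> U"
  shows "Rlow g x a b c d = - Rlow g x a b d c"
proof -
  have "0 = - (\<Sum>j<length [c, d]. \<Sum>l\<in>UNIV. Rup g x a b ([c, d]!j) l * gT x ([c, d][j:=l]))"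
    using ricci[where T=gT and a=a and b=b and js="[c, d]", OF x gT_smooth] NN_gT[OF x, of a b c d] NN_gT[OF x, of b a c d] by simp
  also have "\<dots> = - (Rlow g x a b c d + Rlow g x a b d c)"
    unfolding Rlow_def by (simp add: sum2 gT_def g_sym[OF x, of c])
  finally show ?thesis by simp
qed


lemma Rtensor_smooth: "smooth_on U (\<lambda>y. Rtensor g y js)"
  unfolding Rtensor_def by (rule Rlow_smooth)

lemma hyp_expand: assumes x: "x \<in> U"
  shows "nabla g (nabla g (Rtensor g)) x [a,b,c,d,e,f] - nabla g (nabla g (Rtensor g)) x [b,a,c,d,e,f]
   = - ((\<Sum>l\<in>UNIV. Rup g x a b c l * Rlow g x l d e f) + (\<Sum>l\<in>UNIV. Rup g x a b d l * Rlow g x c l e f)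
       + (\<Sum>l\<in>UNIV. Rup g x a b e l * Rlow g x c d l f) + (\<Sum>l\<in>UNIV. Rup g x a b f l * Rlow g x c d e l))"
  using ricci[where T="Rtensor g" and a=a and b=b and js="[c,d,e,f]", OF x Rtensor_smooth]
  by (simp add: sum4 Rtensor_def)

end

theorem mainTheorem9:
  fixes U :: "(real^'n::finite) set" and g :: "real^'n \<Rightarrow> 'n \<Rightarrow> 'n \<Rightarrow> real"
  assumes "riemannian_metric_on U g"
    and "pseudosymmetric_on U g"
  shows "\<forall>x\<in>U. \<forall>a b c e.
      (\<Sum>m\<in>UNIV. Ric g x a m * Rup g x b c e m) + (\<Sum>m\<in>UNIV. Ric g x b m * Rup g x c a e m)
        + (\<Sum>m\<in>UNIV. Ric g x c m * Rup g x a b e m) = 0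
    \<and> (\<Sum>m\<in>UNIV. Ric g x a m * Rup g x b e c m) - (\<Sum>m\<in>UNIV. Ric g x b m * Rup g x a c e m)
        + (\<Sum>m\<in>UNIV. Ric g x c m * Rup g x e b a m) - (\<Sum>m\<in>UNIV. Ric g x e m * Rup g x c a b m) = 0"
proof (intro ballI allI)
  interpret rmetric U g using assms(1) by unfold_locales
  obtain L where L: "\<forall>x\<in>U. \<forall>a b c d e f.
     nabla g (nabla g (Rtensor g)) x [a,b,c,d,e,f] - nabla g (nabla g (Rtensor g)) x [b,a,c,d,e,f]
       = L x * QgR g x c d e f a b"
    using assms(2) unfolding pseudosymmetric_on_def by blast
  fix x a b c e assume x: "x \<in> U"
  interpret A: alg "Rlow g x" "Rup g x" "g x" "ginv g x" "Ric g x" "L x"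
  proof
    show "g x i j = g x j i" for i j by (rule g_sym[OF x])
    show "ginv g x i j = ginv g x j i" for i j by (rule ginv_sym[OF x])
    show "(\<Sum>k\<in>UNIV. ginv g x i k * g x k j) = (if i = j then 1 else 0)" for i j by (rule ginv_g[OF x])
    show "Rup g x a b c d = (\<Sum>e\<in>UNIV. Rlow g x a b c e * ginv g x e d)" for a b c d by (rule Rup_Rlow[OF x])
    show "Rlow g x a b c d = - Rlow g x b a c d" for a b c d by (rule Rlow_anti1)
    show "Rlow g x a b c d = - Rlow g x a b d c" for a b c d by (rule Rlow_anti2[OF x])
    show "Rlow g x a b c d + Rlow g x b c a d + Rlow g x c a b d = 0" for a b c d by (rule Rlow_bianchi[OF x])
    show "Ric g x a c = (\<Sum>b\<in>UNIV. Rup g x a b c b)" for a c by (simp add: Ric_def)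
    show "- ((\<Sum>l\<in>UNIV. Rup g x a b c l * Rlow g x l d e f) + (\<Sum>l\<in>UNIV. Rup g x a b d l * Rlow g x c l e f)
       + (\<Sum>l\<in>UNIV. Rup g x a b e l * Rlow g x c d l f) + (\<Sum>l\<in>UNIV. Rup g x a b f l * Rlow g x c d e l))
     = L x * (- g x c b * Rlow g x a d e f + g x c a * Rlow g x b d e f - g x d b * Rlow g x c a e f + g x d a * Rlow g x c b e f
            - g x e b * Rlow g x c d a f + g x e a * Rlow g x c d b f - g x f b * Rlow g x c d e a + g x f a * Rlow g x c d e b)"
      for a b c d e f
      using L x hyp_expand[OF x, of a b c d e f] unfolding QgR_def by simp
  qed
  show "(\<Sum>m\<in>UNIV. Ric g x a m * Rup g x b c e m) + (\<Sum>m\<in>UNIV. Ric g x b m * Rup g x c a e m)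
        + (\<Sum>m\<in>UNIV. Ric g x c m * Rup g x a b e m) = 0
    \<and> (\<Sum>m\<in>UNIV. Ric g x a m * Rup g x b e c m) - (\<Sum>m\<in>UNIV. Ric g x b m * Rup g x a c e m)
        + (\<Sum>m\<in>UNIV. Ric g x c m * Rup g x e b a m) - (\<Sum>m\<in>UNIV. Ric g x e m * Rup g x c a b m) = 0"
    using A.goal1[of a b c e] A.goal2[of a b e c] unfolding A.W4_def by simp
qed


end
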